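(* Let $\mathfrak G=\{G^s:s>0\}$ with $G^s_k=(k!)^s$. Neither $\mathcal E^{(\mathfrak G)}(\mathbb R)$ nor $\mathcal E^{\{\mathfrak G\}}(\mathbb R)$ coincides (as a vector space) with any of $\mathcal E^{(M)}(\mathbb R)$, $\mathcal E^{\{M\}}(\mathbb R)$, $\mathcal E^{(\omega)}(\mathbb R)$, $\mathcal E^{\{\omega\}}(\mathbb R)$, for any sequence $M\in\mathbb R_{>0}^{\mathbb N}$ or any weight function $\omega\in\mathscr W$.
   Context: For $M\in\mathbb R_{>0}^{\mathbb N}$, compact $K\subseteq\mathbb R$, $\rho>0$: $\|f\|^M_{K,\rho}:=\sup\{|f^{(k)}(x)|/(k!\rho^kM_k):x\in K,k\in\mathbb N\}$; $\mathcal E^{(M)}(\mathbb R)$ = smooth $f$ with $\|f\|^M_{K,\rho}<\infty$ for all compact $K$, all $\rho>0$; $\mathcal E^{\{M\}}(\mathbb R)$ = smooth $f$ such that for every compact $K$ there is $\rho$ with $\|f\|^M_{K,\rho}<\infty$; $\mathcal E^{\{M\}}(K)$ = smooth functions on $K$ with some finite $\|f\|^M_{K,\rho}$. $\mathcal E^{(\mathfrak G)}(\mathbb R):=\bigcap_{s>0}\mathcal E^{(G^s)}(\mathbb R)$ and $\mathcal E^{\{\mathfrak G\}}(\mathbb R):=\bigcap_{K}\bigcup_{s>0}\mathcal E^{\{G^s\}}(K)$ (smooth $f$ whose restriction to each compact $K$ lies in some $\mathcal E^{\{G^s\}}(K)$). $\mathscr W$: continuous increasing $\omega:[0,\infty)\to[0,\infty)$,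 $\omega|_{[0,1]}=0$, $\omega\to\infty$, $\omega(2t)=O(\omega(t))$, $\log t=o(\omega(t))$, $t\mapsto\varphi(t):=\omega(e^t)$ convex on $[0,\infty)$; $\varphi^*(t):=\sup_{s\ge0}(st-\varphi(s))$. $\mathcal E^{(\omega)}(\mathbb R)$ / $\mathcal E^{\{\omega\}}(\mathbb R)$: smooth $f$ with $\sup_{x\in K,k}|f^{(k)}(x)|\exp(-\frac1\rho\varphi^*(\rho k))<\infty$ for all compact $K$ and all $\rho>0$ / for all $K$ and some $\rho>0$. *)

theory Defs
  imports "HOL-Analysis.Analysis" "HOL-Library.Landau_Symbols"
begin

definition kderiv :: "nat \<Rightarrow> (real \<Rightarrow> real) \<Rightarrow> real \<Rightarrow> real" where
  "kderiv k f = (deriv ^^ k) f"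

definition smooth :: "(real \<Rightarrow> real) \<Rightarrow> bool" where
  "smooth f \<longleftrightarrow> (\<forall>k x. kderiv k f differentiable (at x))"

definition normM_finite :: "(nat \<Rightarrow> real) \<Rightarrow> real set \<Rightarrow> real \<Rightarrow> (real \<Rightarrow> real) \<Rightarrow> bool" where
  "normM_finite M K \<rho> f \<longleftrightarrow>
     bdd_above {\<bar>kderiv k f x\<bar> / (fact k * \<rho> ^ k * M k) | x k. x \<in> K}"

definition E_beurling :: "(nat \<Rightarrow> real) \<Rightarrow> (real \<Rightarrow> real) set" where
  "E_beurling M = {f. smooth f \<and> (\<forall>K. compact K \<longrightarrow> (\<forall>\<rho>>0. normM_finite M K \<rho> f))}"

definition E_roumieu :: "(nat \<Rightarrow> real) \<Rightarrow> (real \<Rightarrow> real) set" where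
  "E_roumieu M = {f. smooth f \<and> (\<forall>K. compact K \<longrightarrow> (\<exists>\<rho>>0. normM_finite M K \<rho> f))}"

definition gevrey :: "real \<Rightarrow> nat \<Rightarrow> real" where
  "gevrey s k = (fact k) powr s"

definition EG_beurling :: "(real \<Rightarrow> real) set" where
  "EG_beurling = (\<Inter>s\<in>{0<..}. E_beurling (gevrey s))"

definition EG_roumieu :: "(real \<Rightarrow> real) set" where
  "EG_roumieu = {f. smooth f \<and> (\<forall>K. compact K \<longrightarrow>
       (\<exists>s>0. \<exists>\<rho>>0. normM_finite (gevrey s) K \<rho> f))}"

definition weight_fun :: "(real \<Rightarrow> real) \<Rightarrow> bool" where
  "weight_fun \<omega> \<longleftrightarrow>
     continuous_on {0..} \<omega> \<and> mono_on {0..} \<omega> \<and> (\<forall>t\<ge>0. \<omega> t \<ge> 0) \<and>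
     (\<forall>t\<in>{0..1}. \<omega> t = 0) \<and> filterlim \<omega> at_top at_top \<and>
     (\<lambda>t. \<omega> (2 * t)) \<in> O[at_top](\<omega>) \<and>
     (\<lambda>t. ln t) \<in> o[at_top](\<omega>) \<and>
     convex_on {0..} (\<lambda>t. \<omega> (exp t))"

definition young_conj :: "(real \<Rightarrow> real) \<Rightarrow> real \<Rightarrow> real" where
  "young_conj \<omega> t = (SUP s\<in>{0..}. s * t - \<omega> (exp s))"

definition Eomega_finite :: "(real \<Rightarrow> real) \<Rightarrow> real set \<Rightarrow> real \<Rightarrow> (real \<Rightarrow> real) \<Rightarrow> bool" where
  "Eomega_finite \<omega> K \<rho> f \<longleftrightarrow>
     bdd_above {\<bar>kderiv k f x\<bar> * exp (- (1 / \<rho>) * young_conj \<omega> (\<rho> * real k)) | x k. x \<in> K}"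

definition Eomega_beurling :: "(real \<Rightarrow> real) \<Rightarrow> (real \<Rightarrow> real) set" where
  "Eomega_beurling \<omega> = {f. smooth f \<and> (\<forall>K. compact K \<longrightarrow> (\<forall>\<rho>>0. Eomega_finite \<omega> K \<rho> f))}"

definition Eomega_roumieu :: "(real \<Rightarrow> real) \<Rightarrow> (real \<Rightarrow> real) set" where
  "Eomega_roumieu \<omega> = {f. smooth f \<and> (\<forall>K. compact K \<longrightarrow> (\<exists>\<rho>>0. Eomega_finite \<omega> K \<rho> f))}"

end

theory Submission
  imports Defs
begin

definition Dk :: "nat \<Rightarrow> real \<Rightarrow> real" where
  "Dk k y = cos (y + real k * pi / 2) + sin (y + real k * pi / 2)"

lemma cos_sin_pi_half: "cos (t + pi/2) + sin (t + pi/2) = cos t - sin t"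
  by (simp add: cos_add sin_add)

lemma Dk_Suc: "Dk (Suc k) y = cos (y + real k * pi / 2) - sin (y + real k * pi / 2)"
proof -
  have e: "y + real (Suc k) * pi / 2 = (y + real k * pi / 2) + pi/2" by (simp add: field_simps)
  show ?thesis unfolding Dk_def e by (rule cos_sin_pi_half)
qed

lemma Dk_deriv: "((\<lambda>x. Dk k (b * x)) has_real_derivative b * Dk (Suc k) (b * x)) (at x)"
proof -
  have eqf: "(\<lambda>x. Dk k (b * x)) = (\<lambda>x. cos (b * x + real k * pi / 2) + sin (b * x + real k * pi / 2))"
    by (simp add: Dk_def)
  have "((\<lambda>x. cos (b * x + real k * pi / 2) + sin (b * x + real k * pi / 2)) has_real_derivative
     b * (cos (b * x + real k * pi / 2) - sin (b * x + real k * pi / 2))) (at x)"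
    by (auto intro!: derivative_eq_intros simp: algebra_simps)
  then show ?thesis unfolding eqf Dk_Suc .
qed

lemma Dk_bound: "\<bar>Dk k y\<bar> \<le> 2"
  unfolding Dk_def using abs_triangle_ineq[of "cos (y + real k * pi / 2)" "sin (y + real k * pi / 2)"]
    abs_cos_le_one[of "y + real k * pi / 2"] abs_sin_le_one[of "y + real k * pi / 2"] by linarith

lemma Dk0: "\<bar>Dk k 0\<bar> = 1"
proof -
  define t where "t = real k * pi / 2"
  have "(Dk k 0)^2 = (sin t)^2 + (cos t)^2 + 2 * sin t * cos t"
    unfolding Dk_def t_def[symmetric] by (simp add: power2_eq_square algebra_simps)
  moreover have "2 * sin t * cos t = sin (2 * t)" by (rule sin_double[symmetric])
  moreover have "2 * t = real k * pi" unfolding t_def by simp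
  ultimately have "(Dk k 0)^2 = 1" using sin_npi[of k] by simp
  then show ?thesis by (metis abs_power2 one_power2 power2_eq_imp_eq abs_ge_zero zero_le_one abs_one power2_abs)
qed

definition tfk :: "nat \<Rightarrow> (nat \<Rightarrow> real) \<Rightarrow> (nat \<Rightarrow> real) \<Rightarrow> real \<Rightarrow> real" where
  "tfk k c b x = (\<Sum>j. c j * b j ^ k * Dk k (b j * x))"

definition tf :: "(nat \<Rightarrow> real) \<Rightarrow> (nat \<Rightarrow> real) \<Rightarrow> real \<Rightarrow> real" where
  "tf c b = tfk 0 c b"

definition hyp :: "(nat \<Rightarrow> real) \<Rightarrow> (nat \<Rightarrow> real) \<Rightarrow> bool" where
  "hyp c b \<longleftrightarrow> (\<forall>j. c j \<ge> 0) \<and> (\<forall>j. b j \<ge> 0) \<and> (\<forall>k. \<exists>C. \<forall>j. c j * b j ^ k \<le> C * (1/2)^j)"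

lemma hyp_summable:
  assumes "hyp c b"
  shows "summable (\<lambda>j. c j * b j ^ k)"
proof -
  from assms obtain C where C: "\<And>j. c j * b j ^ k \<le> C * (1/2)^j" and nn: "\<And>j. c j \<ge> 0" "\<And>j. b j \<ge> 0"
    unfolding hyp_def by blast
  show ?thesis
  proof (rule summable_comparison_test)
    show "\<exists>N. \<forall>n\<ge>N. norm (c n * b n ^ k) \<le> C * (1/2)^n" using C nn by auto
    show "summable (\<lambda>n. C * (1/2::real)^n)" by (intro summable_mult summable_geometric) simp
  qed
qed

lemma tfk_deriv:
  assumes "hyp c b"
  shows "(tfk k c b has_real_derivative tfk (Suc k) c b x) (at x)"
proof -
  have nn: "\<And>j. c j \<ge> 0" "\<And>j. b j \<ge> 0" using assms unfolding hyp_def by auto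
  have d: "((\<lambda>x. c n * b n ^ k * Dk k (b n * x)) has_field_derivative c n * b n ^ Suc k * Dk (Suc k) (b n * x)) (at x)" for n x
    using DERIV_cmult[OF Dk_deriv[of k "b n" x], of "c n * b n ^ k"] by (simp add: algebra_simps)
  have s2: "summable (\<lambda>j. 2 * (c j * b j ^ Suc k))"
    by (rule summable_mult[OF hyp_summable[OF assms]])
  have unif: "uniformly_convergent_on UNIV (\<lambda>n x. \<Sum>i<n. c i * b i ^ Suc k * Dk (Suc k) (b i * x))"
  proof (rule Weierstrass_m_test'[OF _ s2])
    fix n x
    have "\<bar>c n * b n ^ Suc k * Dk (Suc k) (b n * x)\<bar> = c n * b n ^ Suc k * \<bar>Dk (Suc k) (b n * x)\<bar>"
      using nn by (simp add: abs_mult)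
    also have "\<dots> \<le> c n * b n ^ Suc k * 2"
      using nn by (intro mult_left_mono Dk_bound) auto
    finally show "norm (c n * b n ^ Suc k * Dk (Suc k) (b n * x)) \<le> 2 * (c n * b n ^ Suc k)" by simp
  qed
  have s0: "summable (\<lambda>n. c n * b n ^ k * Dk k (b n * 0))"
    using hyp_summable[OF assms, of k] by (simp add: summable_mult2)
  from has_field_derivative_series'(2)[of UNIV "\<lambda>n x. c n * b n ^ k * Dk k (b n * x)"
      "\<lambda>n x. c n * b n ^ Suc k * Dk (Suc k) (b n * x)" 0 x, OF _ _ unif _ s0]
  show ?thesis using d unfolding tfk_def by (simp add: has_field_derivative_at_within)
qed

lemma kderiv_tf:
  assumes "hyp c b"
  shows "kderiv k (tf c b) = tfk k c b"
proof (induction k)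
  case 0
  then show ?case by (simp add: kderiv_def tf_def)
next
  case (Suc k)
  have "kderiv (Suc k) (tf c b) = deriv (kderiv k (tf c b))" by (simp add: kderiv_def)
  also have "\<dots> = deriv (tfk k c b)" using Suc by simp
  also have "\<dots> = tfk (Suc k) c b"
    by (rule ext, rule DERIV_imp_deriv, rule tfk_deriv[OF assms])
  finally show ?case .
qed

lemma smooth_tf:
  assumes "hyp c b"
  shows "smooth (tf c b)"
  unfolding smooth_def kderiv_tf[OF assms]
  using tfk_deriv[OF assms] real_differentiable_def by blast

definition Aseq :: "(nat \<Rightarrow> real) \<Rightarrow> (nat \<Rightarrow> real) \<Rightarrow> nat \<Rightarrow> real" where
  "Aseq c b k = (\<Sum>j. c j * b j ^ k)"

lemma tfk_bound:
  assumes "hyp c b"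
  shows "\<bar>tfk k c b x\<bar> \<le> 2 * Aseq c b k"
proof -
  have nn: "\<And>j. c j \<ge> 0" "\<And>j. b j \<ge> 0" using assms unfolding hyp_def by auto
  have s: "summable (\<lambda>j. c j * b j ^ k)" using hyp_summable[OF assms] .
  have b: "\<bar>c j * b j ^ k * Dk k (b j * x)\<bar> \<le> 2 * (c j * b j ^ k)" for j
  proof -
    have "\<bar>c j * b j ^ k * Dk k (b j * x)\<bar> = c j * b j ^ k * \<bar>Dk k (b j * x)\<bar>"
      using nn by (simp add: abs_mult)
    also have "\<dots> \<le> c j * b j ^ k * 2"
      using nn by (intro mult_left_mono Dk_bound) auto
    finally show ?thesis by simp
  qed
  have s2: "summable (\<lambda>j. 2 * (c j * b j ^ k))" using s by (rule summable_mult)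
  have sa: "summable (\<lambda>j. \<bar>c j * b j ^ k * Dk k (b j * x)\<bar>)"
    by (rule summable_comparison_test[OF _ s2]) (use b in auto)
  have "\<bar>tfk k c b x\<bar> \<le> (\<Sum>j. \<bar>c j * b j ^ k * Dk k (b j * x)\<bar>)"
    unfolding tfk_def by (rule summable_rabs[OF sa])
  also have "\<dots> \<le> (\<Sum>j. 2 * (c j * b j ^ k))"
    by (rule suminf_le[OF b sa s2])
  also have "\<dots> = 2 * Aseq c b k" unfolding Aseq_def using s by (simp add: suminf_mult)
  finally show ?thesis .
qed

lemma tfk_zero:
  assumes "hyp c b"
  shows "\<bar>tfk k c b 0\<bar> = Aseq c b k"
proof -
  have nn: "\<And>j. c j \<ge> 0" "\<And>j. b j \<ge> 0" using assms unfolding hyp_def by auto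
  have "tfk k c b 0 = (\<Sum>j. c j * b j ^ k) * Dk k 0"
    unfolding tfk_def using hyp_summable[OF assms, of k] by (simp add: suminf_mult2)
  then have "\<bar>tfk k c b 0\<bar> = \<bar>\<Sum>j. c j * b j ^ k\<bar>" by (simp add: abs_mult Dk0)
  also have "\<dots> = Aseq c b k" unfolding Aseq_def
    using suminf_nonneg[OF hyp_summable[OF assms, of k]] nn by simp
  finally show ?thesis .
qed

lemma Aseq_ge:
  assumes "hyp c b"
  shows "c j * b j ^ k \<le> Aseq c b k"
proof -
  have nn: "\<And>j. c j \<ge> 0" "\<And>j. b j \<ge> 0" using assms unfolding hyp_def by auto
  show ?thesis unfolding Aseq_def
    using sum_le_suminf[OF hyp_summable[OF assms], of "{j}"] nn by auto
qed


lemma nec_gen: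
  assumes h: "hyp c b" and K: "0 \<in> K" and W: "\<And>k. W k > 0"
    and bd: "bdd_above {\<bar>kderiv k (tf c b) x\<bar> / W k | x k. x \<in> K}"
  shows "\<exists>C. \<forall>j k. c j * b j ^ k \<le> C * W k"
proof -
  from bd obtain C where C: "\<And>z. z \<in> {\<bar>kderiv k (tf c b) x\<bar> / W k | x k. x \<in> K} \<Longrightarrow> z \<le> C"
    unfolding bdd_above_def by blast
  have "c j * b j ^ k \<le> C * W k" for j k
  proof -
    have "\<bar>kderiv k (tf c b) 0\<bar> / W k \<le> C" using K by (intro C) blast
    then have "\<bar>tfk k c b 0\<bar> \<le> C * W k" using W[of k] by (simp add: kderiv_tf[OF h] field_simps)
    then show ?thesis using tfk_zero[OF h, of k] Aseq_ge[OF h, of j k] by linarith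
  qed
  then show ?thesis by blast
qed

lemma suf_gen:
  assumes h: "hyp c b" and W: "\<And>k. W k > 0"
    and le: "\<And>j k. c j * b j ^ k \<le> C * (1/2)^j * W k"
  shows "bdd_above {\<bar>kderiv k (tf c b) x\<bar> / W k | x k. x \<in> K}"
proof -
  have "\<bar>kderiv k (tf c b) x\<bar> / W k \<le> 4 * C" for k x
  proof -
    have sg: "summable (\<lambda>j. C * W k * (1/2::real)^j)"
      by (intro summable_mult summable_geometric) simp
    have "Aseq c b k \<le> (\<Sum>j. C * W k * (1/2::real)^j)"
      unfolding Aseq_def by (rule suminf_le[OF _ hyp_summable[OF h] sg]) (use le in \<open>simp add: ac_simps\<close>)
    also have "\<dots> = C * W k * 2" using suminf_geometric[of "1/2::real"] sg
      by (simp add: suminf_mult)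
    finally have "2 * Aseq c b k \<le> 4 * C * W k" by simp
    then have "\<bar>kderiv k (tf c b) x\<bar> \<le> 4 * C * W k"
      using tfk_bound[OF h, of k x] by (simp add: kderiv_tf[OF h])
    then show ?thesis using W[of k] by (simp add: field_simps)
  qed
  then show ?thesis unfolding bdd_above_def by blast
qed

lemma hyp_from_suf:
  assumes "\<And>j. c j \<ge> 0" "\<And>j. b j \<ge> 0" "\<And>j k. c j * b j ^ k \<le> C * (1/2)^j * W k"
  shows "hyp c b"
  unfolding hyp_def
proof (intro conjI allI)
  fix k
  show "\<exists>C. \<forall>j. c j * b j ^ k \<le> C * (1/2)^j"
    by (rule exI[of _ "C * W k"]) (use assms(3) in \<open>simp add: ac_simps\<close>)
qed (use assms in auto)

definition Suf :: "(nat \<Rightarrow> real) \<Rightarrow> (nat \<Rightarrow> real) \<Rightarrow> (nat \<Rightarrow> real) \<Rightarrow> bool" where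
  "Suf c b W \<longleftrightarrow> (\<exists>C. \<forall>j k. c j * b j ^ k \<le> C * (1/2)^j * W k)"

definition Nec :: "(nat \<Rightarrow> real) \<Rightarrow> (nat \<Rightarrow> real) \<Rightarrow> (nat \<Rightarrow> real) \<Rightarrow> bool" where
  "Nec c b W \<longleftrightarrow> (\<exists>C. \<forall>j k. c j * b j ^ k \<le> C * W k)"

definition WM :: "(nat \<Rightarrow> real) \<Rightarrow> real \<Rightarrow> nat \<Rightarrow> real" where
  "WM M \<rho> k = fact k * \<rho> ^ k * M k"

lemma WM_pos: "(\<And>k. M k > 0) \<Longrightarrow> \<rho> > 0 \<Longrightarrow> WM M \<rho> k > 0"
  unfolding WM_def by simp

lemma normM_suf:
  assumes "hyp c b" "\<And>k. M k > 0" "\<rho> > 0" "Suf c b (WM M \<rho>)"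
  shows "normM_finite M K \<rho> (tf c b)"
proof -
  from assms(4) obtain C where C: "\<And>j k. c j * b j ^ k \<le> C * (1/2)^j * WM M \<rho> k"
    unfolding Suf_def by blast
  show ?thesis unfolding normM_finite_def
    using suf_gen[OF assms(1) WM_pos[OF assms(2,3)] C, of K] unfolding WM_def .
qed

lemma normM_nec:
  assumes "hyp c b" "\<And>k. M k > 0" "\<rho> > 0" "0 \<in> K" "normM_finite M K \<rho> (tf c b)"
  shows "Nec c b (WM M \<rho>)"
  unfolding Nec_def
  by (rule nec_gen[OF assms(1,4) WM_pos[OF assms(2,3)]])
     (use assms(5) in \<open>simp add: normM_finite_def WM_def\<close>)

lemma M_suf:
  assumes "hyp c b" "\<And>k. M k > 0" "\<And>\<rho>. \<rho> > 0 \<Longrightarrow> Suf c b (WM M \<rho>)"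
  shows "tf c b \<in> E_beurling M" "tf c b \<in> E_roumieu M"
  unfolding E_beurling_def E_roumieu_def
  using smooth_tf[OF assms(1)] normM_suf[OF assms(1,2) _ assms(3)]
  by (auto intro: exI[of _ 1])

lemma M_nec:
  assumes "hyp c b" "\<And>k. M k > 0" "tf c b \<in> E_beurling M \<or> tf c b \<in> E_roumieu M"
  shows "\<exists>\<rho>>0. Nec c b (WM M \<rho>)"
proof -
  have "compact {0::real}" by simp
  have "\<exists>\<rho>>0. normM_finite M {0} \<rho> (tf c b)"
  proof (cases "tf c b \<in> E_beurling M")
    case True
    then have "\<forall>K. compact K \<longrightarrow> (\<forall>\<rho>>0. normM_finite M K \<rho> (tf c b))"
      unfolding E_beurling_def by simp
    then have "normM_finite M {0} 1 (tf c b)" by simp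
    then show ?thesis by (intro exI[of _ 1]) auto
  next
    case False
    then have "tf c b \<in> E_roumieu M" using assms(3) by blast
    then have "\<forall>K. compact K \<longrightarrow> (\<exists>\<rho>>0. normM_finite M K \<rho> (tf c b))"
      unfolding E_roumieu_def by simp
    then show ?thesis by simp
  qed
  then obtain \<rho> where "\<rho> > 0" "normM_finite M {0} \<rho> (tf c b)" by blast
  then show ?thesis using normM_nec[OF assms(1,2), of \<rho> "{0}"] by auto
qed

lemma gevrey_pos: "gevrey s k > 0"
  unfolding gevrey_def by simp

definition WG :: "real \<Rightarrow> real \<Rightarrow> nat \<Rightarrow> real" where
  "WG s \<rho> = WM (gevrey s) \<rho>"

lemma EGB_suf:
  assumes "hyp c b" "\<And>s \<rho>. s > 0 \<Longrightarrow> \<rho> > 0 \<Longrightarrow> Suf c b (WG s \<rho>)"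
  shows "tf c b \<in> EG_beurling"
  unfolding EG_beurling_def using M_suf(1)[OF assms(1) gevrey_pos] assms(2) unfolding WG_def by auto

lemma EGR_suf:
  assumes "hyp c b" "s > 0" "\<rho> > 0" "Suf c b (WG s \<rho>)"
  shows "tf c b \<in> EG_roumieu"
proof -
  have n: "normM_finite (gevrey s) K \<rho> (tf c b)" for K
    using normM_suf[OF assms(1) gevrey_pos assms(3) assms(4)[unfolded WG_def]] .
  show ?thesis unfolding EG_roumieu_def mem_Collect_eq
  proof (intro conjI allI impI)
    show "smooth (tf c b)" by (rule smooth_tf[OF assms(1)])
    fix K :: "real set"
    show "\<exists>s>0. \<exists>\<rho>>0. normM_finite (gevrey s) K \<rho> (tf c b)"
      using n assms(2,3) by blast
  qed
qed

lemma EGB_nec: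
  assumes "hyp c b" "tf c b \<in> EG_beurling" "s > 0" "\<rho> > 0"
  shows "Nec c b (WG s \<rho>)"
proof -
  have "tf c b \<in> E_beurling (gevrey s)" using assms(2,3) unfolding EG_beurling_def by auto
  then have "normM_finite (gevrey s) {0} \<rho> (tf c b)" using assms(4) unfolding E_beurling_def by auto
  then show ?thesis unfolding WG_def using normM_nec[OF assms(1) gevrey_pos assms(4), of "{0}"] by simp
qed

lemma EGR_nec:
  assumes "hyp c b" "tf c b \<in> EG_roumieu"
  shows "\<exists>s>0. \<exists>\<rho>>0. Nec c b (WG s \<rho>)"
proof -
  have "compact {0::real}" by simp
  then obtain s \<rho> where "s > 0" "\<rho> > 0" "normM_finite (gevrey s) {0} \<rho> (tf c b)"
    using assms(2) unfolding EG_roumieu_def by blast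
  moreover have "Nec c b (WM (gevrey s) \<rho>)"
    by (rule normM_nec[OF assms(1) gevrey_pos \<open>\<rho>>0\<close> _ \<open>normM_finite (gevrey s) {0} \<rho> (tf c b)\<close>]) simp
  ultimately show ?thesis unfolding WG_def by blast
qed

lemma EG_nec:
  assumes "hyp c b" "tf c b \<in> EG_beurling \<or> tf c b \<in> EG_roumieu"
  shows "\<exists>s>0. \<exists>\<rho>>0. Nec c b (WG s \<rho>)"
proof (cases "tf c b \<in> EG_roumieu")
  case True
  then show ?thesis using EGR_nec[OF assms(1)] by blast
next
  case False
  then have "Nec c b (WG 1 1)" using assms EGB_nec[OF assms(1), of 1 1] by auto
  then show ?thesis by (intro exI[of _ 1] conjI) auto
qed


lemma gev_pos: "gevrey s k > 0"
  unfolding gevrey_def by simp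

lemma pow_fact_le_exp:
  fixes y :: real assumes "y \<ge> 0"
  shows "y ^ k / fact k \<le> exp y"
proof -
  have s: "(\<lambda>n. y ^ n / fact n) sums exp y"
    using exp_converges[of y] by (simp add: divide_inverse ac_simps)
  show ?thesis
    using sum_le_suminf[OF sums_summable[OF s], of "{k}"] sums_unique[OF s] assms by auto
qed

lemma pow_powr_swap:
  fixes y :: real assumes "y > 0"
  shows "(y ^ k) powr a = (y powr a) ^ k"
proof -
  have "(y ^ k) powr a = (y powr real k) powr a" using assms by (simp add: powr_realpow)
  also have "\<dots> = (y powr a) powr real k" by (simp add: powr_powr mult.commute)
  also have "\<dots> = (y powr a) ^ k" using assms by (simp add: powr_realpow)
  finally show ?thesis .
qed

lemma G_up:
  fixes b s \<rho> :: real
  assumes b: "b \<ge> 0" and s: "s > 0" and r: "\<rho> > 0"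
  shows "b ^ k \<le> exp ((1+s) * (b/\<rho>) powr (1/(1+s))) * (fact k * \<rho> ^ k * gevrey s k)"
proof (cases "b = 0")
  case True
  show ?thesis
  proof (cases k)
    case 0 then show ?thesis using True by (simp add: gevrey_def)
  next
    case (Suc n)
    have "0 \<le> exp ((1+s) * (b/\<rho>) powr (1/(1+s))) * (fact k * \<rho> ^ k * gevrey s k)"
      using gev_pos[of s k] r by simp
    then show ?thesis using True Suc by simp
  qed
next
  case False
  with b have bp: "b > 0" by simp
  define y where "y = (b/\<rho>) powr (1/(1+s))"
  have yp: "y > 0" unfolding y_def using bp r by simp
  have fk: "fact k > (0::real)" by simp
  have ypow: "y powr (1+s) = b/\<rho>" unfolding y_def using bp r s
    by (simp add: powr_powr)
  have "(y ^ k / fact k) powr (1+s) = (y powr (1+s)) ^ k / (fact k powr (1+s))"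
    using yp fk by (simp add: powr_divide pow_powr_swap)
  also have "\<dots> = (b/\<rho>) ^ k / (fact k * gevrey s k)"
    unfolding ypow gevrey_def using fk by (simp add: powr_add)
  finally have eq: "(y ^ k / fact k) powr (1+s) = (b/\<rho>) ^ k / (fact k * gevrey s k)" .
  have "(y ^ k / fact k) powr (1+s) \<le> (exp y) powr (1+s)"
    using pow_fact_le_exp[of y k] yp s by (intro powr_mono2) auto
  also have "\<dots> = exp ((1+s) * y)" by (simp add: powr_def)
  finally have "(b/\<rho>) ^ k / (fact k * gevrey s k) \<le> exp ((1+s) * y)" using eq by simp
  then have "b ^ k / (\<rho> ^ k * (fact k * gevrey s k)) \<le> exp ((1+s) * y)"
    by (simp add: power_divide divide_divide_eq_left)
  then show ?thesis unfolding y_def using r gev_pos[of s k] fk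
    by (simp add: divide_le_eq ac_simps)
qed

lemma G_low:
  fixes b s \<rho> :: real
  assumes b: "b > 0" and s: "s > 0" and r: "\<rho> > 0"
  shows "\<exists>k. 2 powr ((b/\<rho>) powr (1/(1+s)) / 2 - 1) * (fact k * \<rho> ^ k * gevrey s k) \<le> b ^ k"
proof -
  define y where "y = (b/\<rho>) powr (1/(1+s))"
  have yp: "y > 0" unfolding y_def using b r by simp
  define k where "k = nat \<lfloor>y/2\<rfloor>"
  have k1: "real k \<le> y/2" unfolding k_def using yp by linarith
  have k2: "real k \<ge> y/2 - 1" unfolding k_def using yp by linarith
  have fk: "fact k > (0::real)" by simp
  have ypow: "y powr (1+s) = b/\<rho>" unfolding y_def using b r s
    by (simp add: powr_powr)
  have eq: "(y ^ k / fact k) powr (1+s) = (b/\<rho>) ^ k / (fact k * gevrey s k)"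
  proof -
    have "(y ^ k / fact k) powr (1+s) = (y powr (1+s)) ^ k / (fact k powr (1+s))"
      using yp fk by (simp add: powr_divide pow_powr_swap)
    also have "\<dots> = (b/\<rho>) ^ k / (fact k * gevrey s k)"
      unfolding ypow gevrey_def using fk by (simp add: powr_add)
    finally show ?thesis .
  qed
  have "(2::real) ^ k \<le> y ^ k / fact k"
  proof -
    have "fact k \<le> real k ^ k" using fact_le_power[of k] by simp
    have "(2::real) ^ k * fact k \<le> (2 * real k) ^ k"
      using \<open>fact k \<le> real k ^ k\<close> by (simp add: power_mult_distrib)
    also have "\<dots> \<le> y ^ k" using k1 by (intro power_mono) auto
    finally show ?thesis using fk by (simp add: field_simps)
  qed
  then have "((2::real) ^ k) powr (1+s) \<le> (y ^ k / fact k) powr (1+s)"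
    using s by (intro powr_mono2) auto
  moreover have "(2::real) ^ k \<le> ((2::real) ^ k) powr (1+s)"
  proof -
    have "((2::real) ^ k) powr 1 \<le> ((2::real) ^ k) powr (1+s)"
      using s by (intro powr_mono) auto
    then show ?thesis by simp
  qed
  moreover have "2 powr (y/2 - 1) \<le> (2::real) ^ k"
    using k2 by (simp add: powr_realpow[symmetric])
  ultimately have "2 powr (y/2 - 1) \<le> (b/\<rho>) ^ k / (fact k * gevrey s k)" using eq by linarith
  then have "2 powr (y/2 - 1) * (fact k * \<rho> ^ k * gevrey s k) \<le> b ^ k"
    using r gev_pos[of s k] fk by (simp add: le_divide_eq power_divide ac_simps)
  then show ?thesis unfolding y_def by blast
qed

lemma master_real:
  fixes a b K1 K2 K3 K4 :: real
  assumes "0 < a" "a < b" "K4 > 0"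
  shows "\<exists>X. \<forall>x\<ge>X. K1 * (x + 1)^4 * exp (a * x^2) + K2 * (x + 1)^4 + K3 \<le> K4 * exp (b * x^2 - x)"
proof -
  define d where "d = b - a"
  have d: "d > 0" using assms unfolding d_def by simp
  define S where "S = \<bar>K1\<bar> + \<bar>K2\<bar> + \<bar>K3\<bar>"
  define X where "X = max (max 1 (2/d)) (sqrt (16 * 48 * S / (K4 * d^3)))"
  have "K1 * (x + 1)^4 * exp (a * x^2) + K2 * (x + 1)^4 + K3 \<le> K4 * exp (b * x^2 - x)" if x: "x \<ge> X" for x
  proof -
    have x1: "x \<ge> 1" and x2: "x \<ge> 2/d" and x3: "x \<ge> sqrt (16 * 48 * S / (K4 * d^3))"
      using x unfolding X_def by auto
    have S0: "S \<ge> 0" unfolding S_def by simp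
    have e1: "exp (a * x^2) \<ge> 1" using assms by simp
    have p1: "(x+1)^4 \<ge> (1::real)" using x1 by simp
    have "K1 * (x + 1)^4 * exp (a * x^2) + K2 * (x + 1)^4 + K3
          \<le> \<bar>K1\<bar> * (x + 1)^4 * exp (a * x^2) + \<bar>K2\<bar> * (x + 1)^4 * exp (a * x^2) + \<bar>K3\<bar> * (x + 1)^4 * exp (a * x^2)"
    proof -
      have "K1 * (x + 1)^4 * exp (a * x^2) \<le> \<bar>K1\<bar> * (x + 1)^4 * exp (a * x^2)"
        by (intro mult_right_mono) auto
      moreover have "K2 * (x + 1)^4 \<le> \<bar>K2\<bar> * (x + 1)^4 * exp (a * x^2)"
      proof -
        have "K2 * (x + 1)^4 \<le> \<bar>K2\<bar> * (x + 1)^4" by (intro mult_right_mono) auto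
        also have "\<dots> = \<bar>K2\<bar> * (x + 1)^4 * 1" by simp
        also have "\<dots> \<le> \<bar>K2\<bar> * (x + 1)^4 * exp (a * x^2)"
          using e1 by (intro mult_left_mono) auto
        finally show ?thesis .
      qed
      moreover have "K3 \<le> \<bar>K3\<bar> * (x + 1)^4 * exp (a * x^2)"
      proof -
        have "1 * 1 \<le> (x + 1)^4 * exp (a * x^2)" by (rule mult_mono[OF p1 e1]) auto
        then have "1 \<le> (x + 1)^4 * exp (a * x^2)" by simp
        then have "\<bar>K3\<bar> * 1 \<le> \<bar>K3\<bar> * ((x + 1)^4 * exp (a * x^2))" by (intro mult_left_mono) auto
        then show ?thesis by (simp add: ac_simps)
      qed
      ultimately show ?thesis by linarith
    qed
    also have "\<dots> = S * (x + 1)^4 * exp (a * x^2)" unfolding S_def by (simp add: algebra_simps)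
    also have "\<dots> \<le> S * (16 * x^4) * exp (a * x^2)"
    proof -
      have "(x+1)^4 \<le> (2*x)^4" using x1 by (intro power_mono) auto
      then have "(x+1)^4 \<le> 16 * x^4" by (simp add: power_mult_distrib)
      then show ?thesis using S0 by (intro mult_right_mono mult_left_mono) auto
    qed
    also have "\<dots> \<le> K4 * (d^3 * x^6 / 48) * exp (a * x^2)"
    proof -
      have "x^2 \<ge> 16 * 48 * S / (K4 * d^3)"
      proof -
        have nn: "0 \<le> 16 * 48 * S / (K4 * d^3)" using S0 assms(3) d by simp
        have "sqrt (16 * 48 * S / (K4 * d^3)) \<le> x" by (rule x3)
        then have "(sqrt (16 * 48 * S / (K4 * d^3)))^2 \<le> x^2"
          using nn by (intro power_mono) auto
        then show ?thesis using nn by simp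
      qed
      then have "16 * 48 * S \<le> x^2 * (K4 * d^3)" using assms d by (simp add: divide_le_eq ac_simps)
      then have "S * 16 * x^4 \<le> K4 * (d^3 * x^6 / 48)"
      proof -
        assume h: "16 * 48 * S \<le> x^2 * (K4 * d^3)"
        have "S * 16 * x^4 * 48 = (16 * 48 * S) * x^4" by simp
        also have "\<dots> \<le> x^2 * (K4 * d^3) * x^4" using h by (intro mult_right_mono) auto
        also have "\<dots> = K4 * (d^3 * x^6 / 48) * 48" by (simp add: power_add[symmetric] field_simps)
        finally show ?thesis by simp
      qed
      then show ?thesis by (intro mult_right_mono) (auto simp: ac_simps)
    qed
    also have "\<dots> \<le> K4 * exp (d * x^2 - x) * exp (a * x^2)"
    proof -
      have t0: "d * x^2 / 2 \<ge> 0" using d by simp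
      have "d * x^2 - x \<ge> d * x^2 / 2"
      proof -
        have "d * x \<ge> 2" using x2 d by (simp add: divide_le_eq mult.commute)
        then have "d * x * x \<ge> 2 * x" using x1 by (intro mult_right_mono) auto
        then show ?thesis by (simp add: power2_eq_square ac_simps)
      qed
      then have "exp (d * x^2 / 2) \<le> exp (d * x^2 - x)" by simp
      moreover have "(d * x^2 / 2)^3 / fact 3 \<le> exp (d * x^2 / 2)" by (rule pow_fact_le_exp[OF t0])
      moreover have "(d * x^2 / 2)^3 / fact 3 = d^3 * x^6 / 48"
        by (simp add: fact_numeral power_mult_distrib power_divide flip: power_mult)
      ultimately have "d^3 * x^6 / 48 \<le> exp (d * x^2 - x)" by linarith
      then show ?thesis using assms by (intro mult_right_mono mult_left_mono) auto
    qed
    also have "\<dots> = K4 * exp (b * x^2 - x)"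
      unfolding d_def by (simp add: mult.assoc exp_add[symmetric] algebra_simps)
    finally show ?thesis .
  qed
  then show ?thesis by blast
qed

lemma master:
  fixes a b K1 K2 K3 K4 :: real
  assumes "0 < a" "a < b" "K4 > 0"
  shows "\<exists>J. \<forall>j\<ge>J. K1 * (real j + 1)^4 * exp (a * real j^2) + K2 * (real j + 1)^4 + K3 \<le> K4 * exp (b * real j^2 - real j)"
proof -
  obtain X where X: "\<And>x. x \<ge> X \<Longrightarrow> K1 * (x + 1)^4 * exp (a * x^2) + K2 * (x + 1)^4 + K3 \<le> K4 * exp (b * x^2 - x)"
    using master_real[OF assms] by blast
  show ?thesis
  proof (intro exI allI impI)
    fix j assume "j \<ge> nat \<lceil>X\<rceil>"
    then have "real j \<ge> X" by linarith
    then show "K1 * (real j + 1)^4 * exp (a * real j^2) + K2 * (real j + 1)^4 + K3 \<le> K4 * exp (b * real j^2 - real j)"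
      by (rule X)
  qed
qed

lemma ev_bound:
  fixes f :: "nat \<Rightarrow> real"
  assumes "\<And>j. j \<ge> J \<Longrightarrow> f j \<le> D"
  shows "\<exists>C. \<forall>j. f j \<le> C"
proof -
  define C where "C = max D (Max (f ` {..<J}) )"
  have "f j \<le> C" for j
  proof (cases "j \<ge> J")
    case True then show ?thesis using assms(1)[of j] unfolding C_def by (simp add: le_max_iff_disj)
  next
    case False then have "f j \<le> Max (f ` {..<J})" by (intro Max_ge) auto
    then show ?thesis unfolding C_def by linarith
  qed
  then show ?thesis by blast
qed

lemma ev_bound2:
  fixes P :: "nat \<Rightarrow> nat \<Rightarrow> real"
  assumes "\<And>j k. j \<ge> J \<Longrightarrow> P j k \<le> D" and "\<And>j. j < J \<Longrightarrow> \<exists>C. \<forall>k. P j k \<le> C"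
  shows "\<exists>C. \<forall>j k. P j k \<le> C"
proof -
  have "\<forall>j. \<exists>C. j < J \<longrightarrow> (\<forall>k. P j k \<le> C)" using assms(2) by blast
  from choice[OF this] obtain g where g0: "\<forall>j. j < J \<longrightarrow> (\<forall>k. P j k \<le> g j)" by blast
  then have g: "\<And>j k. j < J \<Longrightarrow> P j k \<le> g j" by blast
  define C where "C = max D (Max (g ` {..<J}) )"
  have "P j k \<le> C" for j k
  proof (cases "j \<ge> J")
    case True then show ?thesis using assms(1)[of j k] unfolding C_def by (simp add: le_max_iff_disj)
  next
    case False then have "g j \<le> Max (g ` {..<J})" by (intro Max_ge) auto
    then show ?thesis using g[of j k] False unfolding C_def by linarith
  qed
  then show ?thesis by blast
qed


lemma wf_nonneg: "weight_fun \<omega> \<Longrightarrow> t \<ge> 0 \<Longrightarrow> \<omega> t \<ge> 0"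
  unfolding weight_fun_def by auto

lemma wf_mono: "weight_fun \<omega> \<Longrightarrow> 0 \<le> x \<Longrightarrow> x \<le> y \<Longrightarrow> \<omega> x \<le> \<omega> y"
  unfolding weight_fun_def by (auto intro: mono_onD)

lemma wf_convex: "weight_fun \<omega> \<Longrightarrow> convex_on {0..} (\<lambda>t. \<omega> (exp t))"
  unfolding weight_fun_def by auto

lemma wf_ln:
  assumes "weight_fun \<omega>" "c > 0"
  shows "\<exists>X\<ge>1. \<forall>x\<ge>X. ln x \<le> c * \<omega> x"
proof -
  have "(\<lambda>t. ln t) \<in> o[at_top](\<omega>)" using assms(1) unfolding weight_fun_def by auto
  from landau_o.smallD[OF this assms(2)]
  obtain X0 where X0: "\<And>x. x \<ge> X0 \<Longrightarrow> norm (ln x) \<le> c * norm (\<omega> x)"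
    unfolding eventually_at_top_linorder by blast
  show ?thesis
  proof (intro exI[of _ "max X0 1"] conjI allI impI)
    fix x assume x: "x \<ge> max X0 1"
    have x0: "X0 \<le> x" using x by simp
    have "ln x \<le> norm (ln x)" by simp
    also have "\<dots> \<le> c * norm (\<omega> x)" by (rule X0[OF x0])
    also have "\<dots> = c * \<omega> x" using wf_nonneg[OF assms(1), of x] x by simp
    finally show "ln x \<le> c * \<omega> x" .
  qed simp
qed

lemma wf_doubling:
  assumes "weight_fun \<omega>"
  shows "\<exists>L\<ge>1. \<exists>X\<ge>1. \<forall>x\<ge>X. \<omega> (2 * x) \<le> L * \<omega> x"
proof -
  have "(\<lambda>t. \<omega> (2 * t)) \<in> O[at_top](\<omega>)" using assms(1) unfolding weight_fun_def by auto
  then obtain c where c: "c > 0" "eventually (\<lambda>x. norm (\<omega> (2 * x)) \<le> c * norm (\<omega> x)) at_top"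
    by (rule landau_o.bigE)
  then obtain X0 where X0: "\<And>x. x \<ge> X0 \<Longrightarrow> norm (\<omega> (2 * x)) \<le> c * norm (\<omega> x)"
    unfolding eventually_at_top_linorder by blast
  have "\<forall>x\<ge>max X0 1. \<omega> (2 * x) \<le> max c 1 * \<omega> x"
  proof (intro allI impI)
    fix x assume x: "x \<ge> max X0 1"
    have x0: "X0 \<le> x" using x by simp
    have "\<omega> (2 * x) \<le> norm (\<omega> (2 * x))" by simp
    also have "\<dots> \<le> c * norm (\<omega> x)" by (rule X0[OF x0])
    also have "\<dots> = c * \<omega> x" using wf_nonneg[OF assms(1), of x] x by simp
    also have "\<dots> \<le> max c 1 * \<omega> x" using wf_nonneg[OF assms(1), of x] x by (intro mult_right_mono) auto
    finally show "\<omega> (2 * x) \<le> max c 1 * \<omega> x" .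
  qed
  moreover have "max c 1 \<ge> 1" "max X0 1 \<ge> 1" by auto
  ultimately show ?thesis by blast
qed

lemma yc_bdd:
  assumes "weight_fun \<omega>" "t \<ge> 0"
  shows "bdd_above ((\<lambda>s. s * t - \<omega> (exp s)) ` {0..})"
proof -
  obtain X where X: "X \<ge> 1" "\<And>x. x \<ge> X \<Longrightarrow> ln x \<le> (1/(t+1)) * \<omega> x"
    using wf_ln[OF assms(1), of "1/(t+1)"] assms(2) by auto
  have "s * t - \<omega> (exp s) \<le> ln X * t" if s: "s \<ge> 0" for s
  proof (cases "exp s \<ge> X")
    case True
    then have "s \<le> (1/(t+1)) * \<omega> (exp s)" using X(2)[of "exp s"] by simp
    then have "(t+1) * s \<le> \<omega> (exp s)" using assms(2) by (simp add: field_simps)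
    moreover have "ln X * t \<ge> 0" using X(1) assms(2) by simp
    moreover have "(t+1) * s = s * t + s" by (simp add: algebra_simps)
    ultimately show ?thesis using s by linarith
  next
    case False
    then have "exp s < X" by simp
    then have "ln (exp s) < ln X" using X(1) by (subst ln_less_cancel_iff) auto
    then have "s \<le> ln X" by simp
    then have "s * t \<le> ln X * t" using assms(2) by (intro mult_right_mono) auto
    moreover have "\<omega> (exp s) \<ge> 0" using wf_nonneg[OF assms(1)] by simp
    ultimately show ?thesis by linarith
  qed
  then show ?thesis unfolding bdd_above_def by blast
qed

lemma yc_upper:
  assumes "weight_fun \<omega>" "t \<ge> 0" "s \<ge> 0"
  shows "s * t - \<omega> (exp s) \<le> young_conj \<omega> t"
  unfolding young_conj_def by (rule cSUP_upper[OF _ yc_bdd[OF assms(1,2)]]) (use assms in auto)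

lemma yc_least:
  assumes "\<And>s. s \<ge> 0 \<Longrightarrow> s * t - \<omega> (exp s) \<le> D"
  shows "young_conj \<omega> t \<le> D"
  unfolding young_conj_def by (rule cSUP_least) (use assms in auto)

lemma yc_mono:
  assumes "weight_fun \<omega>" "0 \<le> t1" "t1 \<le> t2"
  shows "young_conj \<omega> t1 \<le> young_conj \<omega> t2"
proof (rule yc_least)
  fix s :: real assume s: "s \<ge> 0"
  have "s * t1 \<le> s * t2" using s assms by (intro mult_left_mono) auto
  then show "s * t1 - \<omega> (exp s) \<le> young_conj \<omega> t2"
    using yc_upper[OF assms(1) _ s, of t2] assms by linarith
qed

definition WO :: "(real \<Rightarrow> real) \<Rightarrow> real \<Rightarrow> nat \<Rightarrow> real" where
  "WO \<omega> \<rho> k = exp ((1/\<rho>) * young_conj \<omega> (\<rho> * real k))"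

lemma Omega_up:
  assumes w: "weight_fun \<omega>" and b: "b \<ge> 1" and r: "\<rho> > 0"
  shows "b ^ k \<le> exp (\<omega> b / \<rho>) * WO \<omega> \<rho> k"
proof -
  have "ln b * (\<rho> * real k) - \<omega> (exp (ln b)) \<le> young_conj \<omega> (\<rho> * real k)"
    using b r by (intro yc_upper[OF w]) auto
  then have "ln b * (\<rho> * real k) \<le> young_conj \<omega> (\<rho> * real k) + \<omega> b" using b by simp
  then have "real k * ln b \<le> \<omega> b / \<rho> + (1/\<rho>) * young_conj \<omega> (\<rho> * real k)"
    using r by (simp add: field_simps)
  then have "exp (real k * ln b) \<le> exp (\<omega> b / \<rho> + (1/\<rho>) * young_conj \<omega> (\<rho> * real k))" by simp
  moreover have "exp (real k * ln b) = b ^ k" using b by (simp add: exp_of_nat_mult)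
  ultimately show ?thesis unfolding WO_def by (simp add: exp_add)
qed

lemma Omega_low:
  assumes w: "weight_fun \<omega>" and r: "\<rho> > 0"
  shows "\<exists>B. \<forall>b\<ge>B. \<exists>k. exp (3/4 * \<omega> b / \<rho> - ln b) * WO \<omega> \<rho> k \<le> b ^ k"
proof -
  obtain L X where L: "L \<ge> 1" and X: "X \<ge> 1" and dbl: "\<And>x. x \<ge> X \<Longrightarrow> \<omega> (2 * x) \<le> L * \<omega> x"
    using wf_doubling[OF w] by blast
  define \<phi> where "\<phi> t = \<omega> (exp t)" for t
  have cvx: "convex_on {0..} \<phi>" unfolding \<phi>_def by (rule wf_convex[OF w])
  have \<phi>mono: "\<phi> x \<le> \<phi> y" if "x \<le> y" for x y
    unfolding \<phi>_def using that by (intro wf_mono[OF w]) auto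
  have \<phi>nn: "\<phi> x \<ge> 0" for x unfolding \<phi>_def using wf_nonneg[OF w] by simp
  define \<delta> where "\<delta> = 1 / (4 * L^2)"
  have \<delta>: "\<delta> > 0" "\<delta> \<le> 1/4" using L unfolding \<delta>_def by (auto simp: field_simps)
  have "\<exists>k. exp (3/4 * \<omega> b / \<rho> - ln b) * WO \<omega> \<rho> k \<le> b ^ k"
    if b: "b \<ge> max X (exp 1)" for b
  proof -
    have bX: "b \<ge> X" and be: "b \<ge> exp 1" using b by auto
    have bpos: "b > 0" using bX X by simp
    define u where "u = ln b"
    have u1: "u \<ge> 1" unfolding u_def using be bpos by (metis ln_exp ln_le_cancel_iff exp_gt_zero)
    have \<phi>u: "\<phi> u = \<omega> b" unfolding \<phi>_def u_def using bpos by simp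
    have \<phi>u1: "\<phi> (u + 1) \<le> L^2 * \<phi> u"
    proof -
      have "\<phi> (u + 1) = \<omega> (exp 1 * b)" unfolding \<phi>_def u_def using bpos by (simp add: exp_add mult.commute)
      also have "\<dots> \<le> \<omega> (2 * (2 * b))"
        using bpos exp_le by (intro wf_mono[OF w]) (auto intro!: mult_right_mono)
      also have "\<dots> \<le> L * \<omega> (2 * b)" using bX X by (intro dbl) auto
      also have "\<dots> \<le> L * (L * \<omega> b)" using bX L by (intro mult_left_mono dbl) auto
      finally show ?thesis using \<phi>u by (simp add: power2_eq_square)
    qed
    define y where "y = (\<phi> u - \<phi> (u - \<delta>)) / \<delta>"
    have y0: "y \<ge> 0" unfolding y_def using \<delta> \<phi>mono[of "u - \<delta>" u] by simp
    have yd: "y * \<delta> = \<phi> u - \<phi> (u - \<delta>)" unfolding y_def using \<delta> by simp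
    have key: "s * y - \<phi> s \<le> u * y - \<phi> u + y * \<delta>" if s: "s \<ge> 0" for s
    proof -
      consider "s > u" | "s = u" | "s \<le> u - \<delta>" | "u - \<delta> < s" "s < u" by linarith
      then show ?thesis
      proof cases
        case 1
        have "(\<phi> (u - \<delta>) - \<phi> u) / ((u - \<delta>) - u) \<le> (\<phi> u - \<phi> s) / (u - s)"
          using convex_on_slope_le[OF cvx, of "u - \<delta>" s u] 1 \<delta> u1 by auto
        then have "y \<le> (\<phi> s - \<phi> u) / (s - u)" unfolding y_def using \<delta> 1
          by (simp add: field_simps)
        then have "y * (s - u) \<le> \<phi> s - \<phi> u" using 1 by (simp add: field_simps)
        then show ?thesis using y0 \<delta> by (simp add: algebra_simps) (smt (verit) mult_nonneg_nonneg)
      next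
        case 2 then show ?thesis using y0 \<delta> by simp
      next
        case 3
        show ?thesis
        proof (cases "s = u - \<delta>")
          case True
          have e: "s * y = u * y - \<delta> * y" unfolding True by (simp add: algebra_simps)
          have "y * \<delta> \<ge> 0" using y0 \<delta> by simp
          then show ?thesis using yd e True by (simp add: mult.commute)
        next
          case False
          then have s3: "s < u - \<delta>" using 3 by simp
          have "(\<phi> s - \<phi> u) / (s - u) \<le> (\<phi> (u - \<delta>) - \<phi> u) / ((u - \<delta>) - u)"
            using convex_on_slope_le(2)[OF cvx, of s u "u - \<delta>"] s3 \<delta> s by auto
          then have "(\<phi> u - \<phi> s) / (u - s) \<le> y" unfolding y_def using \<delta> s3
            by (simp add: field_simps)
          then have "\<phi> u - \<phi> s \<le> y * (u - s)" using s3 \<delta> by (simp add: field_simps)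
          moreover have "y * \<delta> \<ge> 0" using y0 \<delta> by simp
          moreover have "y * (u - s) = u * y - s * y" by (simp add: algebra_simps)
          ultimately show ?thesis by linarith
        qed
      next
        case 4
        have "\<phi> s \<ge> \<phi> (u - \<delta>)" using 4 by (intro \<phi>mono) simp
        moreover have "s * y \<le> u * y" using 4 y0 by (intro mult_right_mono) auto
        ultimately show ?thesis using yd by linarith
      qed
    qed
    have yd2: "y * \<delta> \<le> \<phi> u / 4"
    proof -
      have "(\<phi> (u - \<delta>) - \<phi> u) / ((u - \<delta>) - u) \<le> (\<phi> u - \<phi> (u+1)) / (u - (u+1))"
        using convex_on_slope_le[OF cvx, of "u - \<delta>" "u+1" u] \<delta> u1 by auto
      then have "y \<le> \<phi> (u+1) - \<phi> u" unfolding y_def using \<delta> by (simp add: field_simps)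
      then have "y * \<delta> \<le> (\<phi> (u+1) - \<phi> u) * \<delta>" using \<delta> by (intro mult_right_mono) auto
      also have "\<dots> \<le> \<phi> (u+1) * \<delta>" using \<phi>nn[of u] \<delta> by (intro mult_right_mono) auto
      also have "\<dots> \<le> L^2 * \<phi> u * \<delta>" using \<phi>u1 \<delta> by (intro mult_right_mono) auto
      also have "\<dots> = \<phi> u / 4" unfolding \<delta>_def using L by (simp add: field_simps)
      finally show ?thesis .
    qed
    have ycy: "young_conj \<omega> y \<le> u * y - 3/4 * \<phi> u"
    proof (rule yc_least)
      fix s :: real assume "s \<ge> 0"
      then show "s * y - \<omega> (exp s) \<le> u * y - 3/4 * \<phi> u"
        using key[of s] yd2 unfolding \<phi>_def by linarith
    qed
    define k where "k = nat \<lfloor>y / \<rho>\<rfloor>"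
    have k1: "real k \<le> y / \<rho>" unfolding k_def using y0 r by (simp add: divide_nonneg_pos)
    have k2: "real k \<ge> y / \<rho> - 1" unfolding k_def using y0 r by linarith
    have rk: "\<rho> * real k \<le> y" using k1 r by (simp add: field_simps)
    have "young_conj \<omega> (\<rho> * real k) \<le> young_conj \<omega> y"
      using r rk by (intro yc_mono[OF w]) auto
    with ycy have yck: "(1/\<rho>) * young_conj \<omega> (\<rho> * real k) \<le> (u * y - 3/4 * \<phi> u) / \<rho>"
      using r by (simp add: divide_right_mono)
    have "3/4 * \<omega> b / \<rho> - ln b + (1/\<rho>) * young_conj \<omega> (\<rho> * real k) \<le> real k * u"
    proof -
      have "3/4 * \<omega> b / \<rho> - ln b + (1/\<rho>) * young_conj \<omega> (\<rho> * real k)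
            \<le> 3/4 * \<phi> u / \<rho> - u + (u * y - 3/4 * \<phi> u) / \<rho>"
        using yck \<phi>u u_def by simp
      also have "\<dots> = u * (y / \<rho> - 1)" using r by (simp add: field_simps)
      also have "\<dots> \<le> u * real k" using k2 u1 by (intro mult_left_mono) auto
      finally show ?thesis by (simp add: ac_simps)
    qed
    then have "exp (3/4 * \<omega> b / \<rho> - ln b + (1/\<rho>) * young_conj \<omega> (\<rho> * real k)) \<le> exp (real k * u)"
      by simp
    moreover have "exp (real k * u) = b ^ k" unfolding u_def using bpos by (simp add: exp_of_nat_mult)
    ultimately have "exp (3/4 * \<omega> b / \<rho> - ln b) * WO \<omega> \<rho> k \<le> b ^ k"
      unfolding WO_def by (simp add: exp_add)
    then show ?thesis by blast
  qed
  then show ?thesis by blast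
qed

lemma WO_pos: "WO \<omega> \<rho> k > 0" unfolding WO_def by simp

lemma Eomega_finite_iff:
  "Eomega_finite \<omega> K \<rho> f \<longleftrightarrow> bdd_above {\<bar>kderiv k f x\<bar> / WO \<omega> \<rho> k | x k. x \<in> K}"
  unfolding Eomega_finite_def WO_def by (simp add: exp_minus divide_inverse)

lemma O_suf:
  assumes "hyp c b" "\<And>\<rho>. \<rho> > 0 \<Longrightarrow> Suf c b (WO \<omega> \<rho>)"
  shows "tf c b \<in> Eomega_beurling \<omega>" "tf c b \<in> Eomega_roumieu \<omega>"
proof -
  have "Eomega_finite \<omega> K \<rho> (tf c b)" if "\<rho> > 0" for K \<rho>
  proof -
    from assms(2)[OF that] obtain C where C: "\<And>j k. c j * b j ^ k \<le> C * (1/2)^j * WO \<omega> \<rho> k"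
      unfolding Suf_def by blast
    show ?thesis unfolding Eomega_finite_iff by (rule suf_gen[OF assms(1) WO_pos C])
  qed
  then show "tf c b \<in> Eomega_beurling \<omega>" "tf c b \<in> Eomega_roumieu \<omega>"
    unfolding Eomega_beurling_def Eomega_roumieu_def using smooth_tf[OF assms(1)]
    by (auto intro: exI[of _ 1])
qed

lemma O_nec:
  assumes "hyp c b" "tf c b \<in> Eomega_beurling \<omega> \<or> tf c b \<in> Eomega_roumieu \<omega>"
  shows "\<exists>\<rho>>0. Nec c b (WO \<omega> \<rho>)"
proof -
  have "\<exists>\<rho>>0. Eomega_finite \<omega> {0} \<rho> (tf c b)"
  proof (cases "tf c b \<in> Eomega_beurling \<omega>")
    case True
    then have "\<forall>K. compact K \<longrightarrow> (\<forall>\<rho>>0. Eomega_finite \<omega> K \<rho> (tf c b))"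
      unfolding Eomega_beurling_def by simp
    then have "Eomega_finite \<omega> {0} 1 (tf c b)" by simp
    then show ?thesis by (intro exI[of _ 1]) auto
  next
    case False
    then have "tf c b \<in> Eomega_roumieu \<omega>" using assms(2) by blast
    then have "\<forall>K. compact K \<longrightarrow> (\<exists>\<rho>>0. Eomega_finite \<omega> K \<rho> (tf c b))"
      unfolding Eomega_roumieu_def by simp
    then show ?thesis by simp
  qed
  then obtain \<rho> where r: "\<rho> > 0" "Eomega_finite \<omega> {0} \<rho> (tf c b)" by blast
  have "\<exists>C. \<forall>j k. c j * b j ^ k \<le> C * WO \<omega> \<rho> k"
    by (rule nec_gen[OF assms(1) _ WO_pos, of "{0}"]) (use r(2) in \<open>simp_all only: Eomega_finite_iff singleton_iff\<close>)
  then show ?thesis using r(1) unfolding Nec_def by blast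
qed


lemma Suf_from:
  assumes "\<And>j. c j \<ge> 0" "\<And>k. W k \<ge> 0" "\<And>j k. b j ^ k \<le> H j * W k"
    "\<And>j. c j * H j \<le> C * (1/2)^j"
  shows "Suf c b W"
  unfolding Suf_def
proof (intro exI allI)
  fix j k
  have "c j * b j ^ k \<le> c j * (H j * W k)" using assms(1,3) by (intro mult_left_mono) auto
  also have "\<dots> = (c j * H j) * W k" by simp
  also have "\<dots> \<le> (C * (1/2)^j) * W k" using assms(2,4) by (intro mult_right_mono) auto
  finally show "c j * b j ^ k \<le> C * (1/2)^j * W k" .
qed

lemma Nec_to:
  assumes "Nec c b W" "\<And>k. W k > 0" "\<And>j. c j \<ge> 0" "\<And>j. \<exists>k. L j * W k \<le> b j ^ k"
  shows "\<exists>C. \<forall>j. c j * L j \<le> C"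
proof -
  obtain C where C: "\<And>j k. c j * b j ^ k \<le> C * W k" using assms(1) unfolding Nec_def by blast
  have "c j * L j \<le> C" for j
  proof -
    obtain k where k: "L j * W k \<le> b j ^ k" using assms(4) by blast
    have "(c j * L j) * W k = c j * (L j * W k)" by simp
    also have "\<dots> \<le> c j * b j ^ k" using k assms(3) by (intro mult_left_mono) auto
    also have "\<dots> \<le> C * W k" by (rule C)
    finally show ?thesis using assms(2)[of k] by simp
  qed
  then show ?thesis by blast
qed

lemma half_pow: "(1/2::real)^j = exp (- real j * ln 2)"
proof -
  have "exp (- real j * ln 2) = exp (real j * ln (1/2))" by (simp add: ln_div)
  also have "\<dots> = (1/2)^j" by (simp add: exp_of_nat_mult)
  finally show ?thesis by simp
qed

lemma exp_half:
  fixes F :: "nat \<Rightarrow> real"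
  assumes "\<And>j. j \<ge> J \<Longrightarrow> F j + real j * ln 2 \<le> D"
  shows "\<exists>C. \<forall>j. exp (F j) \<le> C * (1/2)^j"
proof -
  obtain D' where D': "\<And>j. F j + real j * ln 2 \<le> D'" using ev_bound[of J "\<lambda>j. F j + real j * ln 2" D] assms by blast
  have "exp (F j) \<le> exp D' * (1/2)^j" for j
  proof -
    have "F j \<le> D' + (- real j * ln 2)" using D'[of j] by simp
    then have "exp (F j) \<le> exp (D' + (- real j * ln 2))" by simp
    also have "\<dots> = exp D' * (1/2)^j" by (simp only: exp_add half_pow)
    finally show ?thesis .
  qed
  then show ?thesis by blast
qed

definition bq :: "nat \<Rightarrow> real" where "bq j = exp (real j ^ 2)"

lemma bq_pos: "bq j > 0" unfolding bq_def by simp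

lemma bq_ge1: "bq j \<ge> 1" unfolding bq_def by simp

lemma bq_ge: "bq j \<ge> real j"
proof -
  have "real j \<le> real j ^ 2" by (cases j) (auto simp: power2_eq_square)
  also have "\<dots> \<le> 1 + real j ^ 2" by simp
  also have "\<dots> \<le> exp (real j ^ 2)" by (rule exp_ge_add_one_self)
  finally show ?thesis unfolding bq_def .
qed

lemma bq_ln: "ln (bq j) = real j ^ 2" unfolding bq_def by simp

lemma bq_powr1: "(bq j) powr \<sigma> = exp (\<sigma> * real j ^ 2)"
  unfolding bq_def powr_def by simp

lemma bq_powr:
  assumes "\<rho> > 0"
  shows "(bq j / \<rho>) powr \<sigma> = exp (\<sigma> * real j ^ 2) * \<rho> powr (- \<sigma>)"
proof -
  have "(bq j / \<rho>) powr \<sigma> = bq j powr \<sigma> / \<rho> powr \<sigma>"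
    by (intro powr_divide less_imp_le assms bq_pos)
  also have "\<dots> = exp (\<sigma> * real j ^ 2) * \<rho> powr (- \<sigma>)"
    by (simp add: bq_powr1 powr_minus divide_inverse)
  finally show ?thesis .
qed

lemma y_powr_le:
  assumes "\<sigma> > 0" "\<sigma> \<le> 2" "\<rho> > 0"
  shows "((real j + 1)^2 * bq j / \<rho>) powr \<sigma> \<le> (real j + 1)^4 * exp (\<sigma> * real j ^ 2) * \<rho> powr (- \<sigma>)"
proof -
  have j1: "real j + 1 \<ge> 1" by simp
  have a: "0 \<le> (real j + 1)^2" by simp
  have b: "0 \<le> bq j / \<rho>" using bq_pos[of j] assms by simp
  have "((real j + 1)^2 * bq j / \<rho>) powr \<sigma> = ((real j + 1)^2 * (bq j / \<rho>)) powr \<sigma>" by simp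
  also have "\<dots> = ((real j + 1)^2) powr \<sigma> * (bq j / \<rho>) powr \<sigma>" by (rule powr_mult)
  finally have e1: "((real j + 1)^2 * bq j / \<rho>) powr \<sigma> = ((real j + 1)^2) powr \<sigma> * (bq j / \<rho>) powr \<sigma>" .
  have "((real j + 1)^2) powr \<sigma> = ((real j + 1) powr \<sigma>)^2" by (rule pow_powr_swap) simp
  also have "\<dots> = (real j + 1) powr (2 * \<sigma>)" using powr_add[of "real j + 1" \<sigma> \<sigma>] by (simp add: power2_eq_square)
  also have "\<dots> \<le> (real j + 1) powr 4" using j1 assms by (intro powr_mono) auto
  also have "\<dots> = (real j + 1)^4" using powr_realpow[of "real j + 1" 4] by simp
  finally have e2: "((real j + 1)^2) powr \<sigma> \<le> (real j + 1)^4" .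
  have "((real j + 1)^2 * bq j / \<rho>) powr \<sigma> \<le> (real j + 1)^4 * (bq j / \<rho>) powr \<sigma>"
    unfolding e1 by (intro mult_right_mono e2) simp
  then show ?thesis using assms by (simp add: bq_powr mult.assoc)
qed

lemma y_powr_ge:
  assumes "\<sigma> > 0"
  shows "((real j + 1)^2 * bq j) powr \<sigma> \<ge> exp (\<sigma> * real j ^ 2)"
proof -
  have "(bq j) powr \<sigma> \<le> ((real j + 1)^2 * bq j) powr \<sigma>"
  proof (rule powr_mono2)
    show "bq j \<le> (real j + 1)^2 * bq j"
      using bq_pos[of j] by (simp add: power2_eq_square mult_le_cancel_right1 algebra_simps)
  qed (use assms bq_pos[of j] in auto)
  then show ?thesis by (simp add: bq_powr1)
qed

lemma pow4:
  shows "real j \<le> (real j + 1)^4" "real j ^ 2 \<le> (real j + 1)^4" "(real j + 1)^2 \<le> (real j + 1)^4"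
    "(real j + 1) * real j ^ 2 \<le> (real j + 1)^4" "1 \<le> (real j + 1)^4"
proof -
  have j1: "real j + 1 \<ge> 1" by simp
  have a: "(real j + 1)^n \<le> (real j + 1)^4" if "n \<le> 4" for n
    using j1 that by (intro power_increasing) auto
  have "real j \<le> (real j + 1)^1" by simp
  then show "real j \<le> (real j + 1)^4" using a[of 1] by linarith
  have "real j ^ 2 \<le> (real j + 1)^2" by (intro power_mono) auto
  then show "real j ^ 2 \<le> (real j + 1)^4" using a[of 2] by linarith
  show "(real j + 1)^2 \<le> (real j + 1)^4" using a[of 2] by simp
  have "(real j + 1) * real j ^ 2 \<le> (real j + 1) * (real j + 1)^2"
    by (intro mult_left_mono power_mono) auto
  also have "\<dots> = (real j + 1)^3" by (simp add: power_Suc[symmetric] del: power_Suc)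
  finally show "(real j + 1) * real j ^ 2 \<le> (real j + 1)^4" using a[of 3] by linarith
  show "1 \<le> (real j + 1)^4" using j1 by simp
qed

lemma master':
  fixes a b K1 K2 K3 K4 :: real
  assumes "0 < a" "a < b" "K4 > 0"
  shows "\<exists>J. \<forall>j\<ge>J. K1 * (real j + 1)^4 * exp (a * real j^2) + K2 * (real j + 1)^4 + K3 \<le> K4 * exp (b * real j^2)"
proof -
  obtain J where J: "\<And>j. j \<ge> J \<Longrightarrow> K1 * (real j + 1)^4 * exp (a * real j^2) + K2 * (real j + 1)^4 + K3 \<le> K4 * exp (b * real j^2 - real j)"
    using master[OF assms] by blast
  have "K4 * exp (b * real j^2 - real j) \<le> K4 * exp (b * real j^2)" for j
    using assms(3) by (intro mult_left_mono) auto
  then show ?thesis using J by (meson order.trans)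
qed

lemma WG_eq: "WG s \<rho> k = fact k * \<rho> ^ k * gevrey s k"
  unfolding WG_def WM_def by simp

lemma WG_pos: "\<rho> > 0 \<Longrightarrow> WG s \<rho> k > 0"
  unfolding WG_eq using gevrey_pos[of s k] by simp

lemma Gsuf:
  assumes "s > 0" "\<rho> > 0" "\<And>j. c j \<ge> 0" "\<And>j. b j \<ge> 0"
    "\<And>j. c j * exp ((1+s) * (b j/\<rho>) powr (1/(1+s))) \<le> C * (1/2)^j"
  shows "Suf c b (WG s \<rho>)"
  by (rule Suf_from[OF assms(3) _ _ assms(5)]) (use WG_pos[OF assms(2)] G_up[OF assms(4) assms(1,2)] in \<open>auto simp: WG_eq less_imp_le\<close>)

lemma Gnec:
  assumes "Nec c b (WG s \<rho>)" "s > 0" "\<rho> > 0" "\<And>j. c j \<ge> 0" "\<And>j. b j > 0"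
  shows "\<exists>C. \<forall>j. c j * 2 powr ((b j/\<rho>) powr (1/(1+s)) / 2 - 1) \<le> C"
  by (rule Nec_to[OF assms(1) WG_pos[OF assms(3)] assms(4)]) (use G_low[OF assms(5) assms(2,3)] in \<open>simp add: WG_eq\<close>)

lemma Osuf:
  assumes "weight_fun \<omega>" "\<rho> > 0" "\<And>j. c j \<ge> 0" "\<And>j. b j \<ge> 1"
    "\<And>j. c j * exp (\<omega> (b j) / \<rho>) \<le> C * (1/2)^j"
  shows "Suf c b (WO \<omega> \<rho>)"
  by (rule Suf_from[OF assms(3) _ _ assms(5)]) (use WO_pos Omega_up[OF assms(1) assms(4) assms(2)] in \<open>auto simp: less_imp_le\<close>)

lemma Onec:
  assumes "Nec c b (WO \<omega> \<rho>)" "weight_fun \<omega>" "\<rho> > 0" "\<And>j. c j \<ge> 0"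
  shows "\<exists>C B. \<forall>j. b j \<ge> B \<longrightarrow> c j * exp (3/4 * \<omega> (b j) / \<rho> - ln (b j)) \<le> C"
proof -
  obtain B where B: "\<And>x. x \<ge> B \<Longrightarrow> \<exists>k. exp (3/4 * \<omega> x / \<rho> - ln x) * WO \<omega> \<rho> k \<le> x ^ k"
    using Omega_low[OF assms(2,3)] by blast
  obtain C where C: "\<And>j k. c j * b j ^ k \<le> C * WO \<omega> \<rho> k" using assms(1) unfolding Nec_def by blast
  have "c j * exp (3/4 * \<omega> (b j) / \<rho> - ln (b j)) \<le> C" if bj: "b j \<ge> B" for j
  proof -
    obtain k where k: "exp (3/4 * \<omega> (b j) / \<rho> - ln (b j)) * WO \<omega> \<rho> k \<le> b j ^ k" using B[OF bj] by blast
    have "(c j * exp (3/4 * \<omega> (b j) / \<rho> - ln (b j))) * WO \<omega> \<rho> k = c j * (exp (3/4 * \<omega> (b j) / \<rho> - ln (b j)) * WO \<omega> \<rho> k)" by simp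
    also have "\<dots> \<le> c j * b j ^ k" using k assms(4) by (intro mult_left_mono) auto
    also have "\<dots> \<le> C * WO \<omega> \<rho> k" by (rule C)
    finally show ?thesis using WO_pos[of \<omega> \<rho> k] by simp
  qed
  then show ?thesis by blast
qed


lemma le_mult_pow4: "0 \<le> P \<Longrightarrow> P \<le> P * (real j + 1)^4"
  using mult_left_mono[OF pow4(5), of P j] by simp

lemma jln2: "real j * ln 2 \<le> (real j + 1)^4"
proof -
  have "real j * ln 2 \<le> real j * 1" using ln_2_less_1 by (intro mult_left_mono) auto
  then show ?thesis using pow4(1)[of j] by simp
qed

definition c0 :: "nat \<Rightarrow> real" where "c0 j = exp (- exp (real j ^ 2 - real j))"

lemma c0_pos: "c0 j > 0" unfolding c0_def by simp

lemma T0_suf: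
  assumes s: "s > 0" and r: "\<rho> > 0"
  shows "Suf c0 bq (WG s \<rho>)"
proof -
  define \<sigma> where "\<sigma> = 1/(1+s)"
  have \<sigma>: "0 < \<sigma>" "\<sigma> < 1" using s unfolding \<sigma>_def by (auto simp: field_simps)
  define K1 where "K1 = (1+s) * \<rho> powr (- \<sigma>)"
  obtain J where J0: "\<forall>j\<ge>J. K1 * (real j + 1)^4 * exp (\<sigma> * real j^2) + 1 * (real j + 1)^4 + 0 \<le> 1 * exp (1 * real j^2 - real j)"
    using master[OF \<sigma>(1) \<sigma>(2) zero_less_one, of K1 1 0] by blast
  have J: "K1 * (real j + 1)^4 * exp (\<sigma> * real j^2) + 1 * (real j + 1)^4 + 0 \<le> 1 * exp (1 * real j^2 - real j)" if "j \<ge> J" for j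
    using J0 that by blast
  have "\<exists>C. \<forall>j. exp (- exp (real j ^ 2 - real j) + (1+s) * (bq j/\<rho>) powr \<sigma>) \<le> C * (1/2)^j"
  proof (rule exp_half)
    fix j assume "j \<ge> J"
    note J = J[OF this]
    have h1: "(1+s) * (bq j/\<rho>) powr \<sigma> \<le> K1 * (real j + 1)^4 * exp (\<sigma> * real j^2)"
    proof -
      have "(1+s) * (bq j/\<rho>) powr \<sigma> = K1 * exp (\<sigma> * real j^2)"
        unfolding K1_def using r by (simp add: bq_powr ac_simps)
      also have "\<dots> \<le> K1 * exp (\<sigma> * real j^2) * (real j + 1)^4"
        by (rule le_mult_pow4) (use s in \<open>simp add: K1_def\<close>)
      finally show ?thesis by (simp add: ac_simps)
    qed
    have h2: "exp (1 * real j^2 - real j) = exp (real j ^ 2 - real j)" by simp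
    show "- exp (real j ^ 2 - real j) + (1+s) * (bq j/\<rho>) powr \<sigma> + real j * ln 2 \<le> 0"
      using J h1 h2 jln2[of j] by linarith
  qed
  then obtain C where C: "\<And>j. exp (- exp (real j ^ 2 - real j) + (1+s) * (bq j/\<rho>) powr \<sigma>) \<le> C * (1/2)^j"
    by blast
  show ?thesis
  proof (rule Gsuf[OF s r])
    fix j
    show "c0 j \<ge> 0" using c0_pos[of j] by simp
    show "bq j \<ge> 0" using bq_pos[of j] by simp
    show "c0 j * exp ((1+s) * (bq j/\<rho>) powr (1/(1+s))) \<le> C * (1/2)^j"
      using C[of j] unfolding c0_def \<sigma>_def by (simp add: exp_add[symmetric])
  qed
qed

lemma Suf_hyp:
  assumes "Suf c b W" "\<And>j. c j \<ge> 0" "\<And>j. b j \<ge> 0"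
  shows "hyp c b"
proof -
  obtain C where "\<And>j k. c j * b j ^ k \<le> C * (1/2)^j * W k" using assms(1) unfolding Suf_def by blast
  then show ?thesis by (rule hyp_from_suf[OF assms(2,3)])
qed

lemma T0_hyp: "hyp c0 bq"
  by (rule Suf_hyp[OF T0_suf[of 1 1]]) (use c0_pos bq_pos in \<open>auto simp: less_imp_le\<close>)

definition NM :: "(nat \<Rightarrow> real) \<Rightarrow> nat \<Rightarrow> real" where "NM M k = fact k * M k"

lemma WM_eq: "WM M \<rho> k = \<rho> ^ k * NM M k" unfolding WM_def NM_def by simp

definition mM :: "(nat \<Rightarrow> real) \<Rightarrow> real \<Rightarrow> real" where "mM M x = (SUP k. x ^ k / NM M k)"

lemma M_T0:
  assumes Mpos: "\<And>k. M k > 0"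
    and Tnec: "\<And>c b. hyp c b \<Longrightarrow> tf c b \<in> E \<Longrightarrow> \<exists>\<rho>>0. Nec c b (WM M \<rho>)"
    and Esuf: "\<And>c b. hyp c b \<Longrightarrow> (\<And>s \<rho>. s > 0 \<Longrightarrow> \<rho> > 0 \<Longrightarrow> Suf c b (WG s \<rho>)) \<Longrightarrow> tf c b \<in> E"
    and x: "x \<ge> 0"
  shows "bdd_above (range (\<lambda>k. x ^ k / NM M k))"
proof -
  have "tf c0 bq \<in> E" by (rule Esuf[OF T0_hyp T0_suf])
  then obtain \<rho> where r: "\<rho> > 0" "Nec c0 bq (WM M \<rho>)" using Tnec[OF T0_hyp] by blast
  then obtain C where C: "\<And>j k. c0 j * bq j ^ k \<le> C * WM M \<rho> k" unfolding Nec_def by blast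
  define j where "j = nat \<lceil>x * \<rho>\<rceil>"
  have "x * \<rho> \<le> real j" unfolding j_def by linarith
  then have xb: "x \<le> bq j / \<rho>" using bq_ge[of j] r by (simp add: field_simps)
  have Npos: "NM M k > 0" for k unfolding NM_def using Mpos[of k] by simp
  have "x ^ k / NM M k \<le> C / c0 j" for k
  proof -
    have "x ^ k \<le> (bq j / \<rho>) ^ k" using xb x by (intro power_mono) auto
    then have "x ^ k / NM M k \<le> (bq j / \<rho>) ^ k / NM M k" using Npos[of k] by (simp add: divide_right_mono)
    also have "\<dots> = (c0 j * bq j ^ k) / (c0 j * WM M \<rho> k)"
      using c0_pos[of j] r Npos[of k] by (simp add: WM_eq power_divide field_simps)
    also have "\<dots> \<le> (C * WM M \<rho> k) / (c0 j * WM M \<rho> k)"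
      using C[of j k] c0_pos[of j] r Npos[of k] by (intro divide_right_mono) (auto simp: WM_eq)
    also have "\<dots> = C / c0 j" using r Npos[of k] by (simp add: WM_eq)
    finally show ?thesis .
  qed
  then show ?thesis by (intro bdd_aboveI2) auto
qed

locale mctx =
  fixes M :: "nat \<Rightarrow> real"
  assumes Mpos: "\<And>k. M k > 0"
    and mb: "\<And>x. x \<ge> 0 \<Longrightarrow> bdd_above (range (\<lambda>k. x ^ k / NM M k))"
begin

lemma Npos: "NM M k > 0" unfolding NM_def using Mpos[of k] by simp

lemma m_ge: "x \<ge> 0 \<Longrightarrow> x ^ k / NM M k \<le> mM M x"
  unfolding mM_def by (rule cSUP_upper[OF UNIV_I mb])

lemma m_least: "(\<And>k. x ^ k / NM M k \<le> D) \<Longrightarrow> mM M x \<le> D"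
  unfolding mM_def by (rule cSUP_least) auto

lemma m_pos: "x \<ge> 0 \<Longrightarrow> mM M x > 0"
proof -
  assume x: "x \<ge> 0"
  have "x ^ 0 / NM M 0 \<le> mM M x" by (rule m_ge[OF x])
  moreover have "x ^ 0 / NM M 0 > 0" using Npos[of 0] by simp
  ultimately show ?thesis by linarith
qed

lemma m_mono: "0 \<le> x \<Longrightarrow> x \<le> y \<Longrightarrow> mM M x \<le> mM M y"
proof -
  assume xy: "0 \<le> x" "x \<le> y"
  show ?thesis
  proof (rule m_least)
    fix k
    have "x ^ k \<le> y ^ k" using xy by (intro power_mono) auto
    then have "x ^ k / NM M k \<le> y ^ k / NM M k" using Npos[of k] by (simp add: divide_right_mono)
    also have "\<dots> \<le> mM M y" using xy by (intro m_ge) auto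
    finally show "x ^ k / NM M k \<le> mM M y" .
  qed
qed

definition c1 :: "nat \<Rightarrow> real" where "c1 j = (1/2)^j / mM M ((real j + 1) * bq j)"

lemma mj_pos: "mM M ((real j + 1) * bq j) > 0"
  using bq_pos[of j] by (intro m_pos) simp

lemma c1_pos: "c1 j > 0" unfolding c1_def using mj_pos[of j] by simp

lemma T1_suf:
  assumes r: "\<rho> > 0"
  shows "Suf c1 bq (WM M \<rho>)"
proof -
  define P where "P j k = (bq j / \<rho>) ^ k / NM M k / mM M ((real j + 1) * bq j)" for j k
  define J where "J = nat \<lceil>1/\<rho>\<rceil>"
  have "\<exists>C. \<forall>j k. P j k \<le> C"
  proof (rule ev_bound2[of J])
    fix j k assume j: "j \<ge> J"
    then have "real j \<ge> 1/\<rho>" unfolding J_def by linarith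
    then have "1/\<rho> \<le> real j + 1" by linarith
    then have "bq j * (1/\<rho>) \<le> bq j * (real j + 1)" using bq_pos[of j] by (intro mult_left_mono) auto
    then have "bq j / \<rho> \<le> (real j + 1) * bq j" by (simp add: ac_simps)
    then have "(bq j / \<rho>) ^ k \<le> ((real j + 1) * bq j) ^ k" using r bq_pos[of j] by (intro power_mono) auto
    then have "(bq j / \<rho>) ^ k / NM M k \<le> ((real j + 1) * bq j) ^ k / NM M k"
      using Npos[of k] by (simp add: divide_right_mono)
    also have "\<dots> \<le> mM M ((real j + 1) * bq j)" using bq_pos[of j] by (intro m_ge) simp
    finally have le: "(bq j / \<rho>) ^ k / NM M k \<le> mM M ((real j + 1) * bq j)" .
    show "P j k \<le> 1" unfolding P_def by (rule iffD2[OF divide_le_eq_1_pos[OF mj_pos] le])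
  next
    fix j assume "j < J"
    have "P j k \<le> mM M (bq j / \<rho>) / mM M ((real j + 1) * bq j)" for k
      unfolding P_def using mj_pos[of j] bq_pos[of j] r
      by (intro divide_right_mono m_ge) auto
    then show "\<exists>C. \<forall>k. P j k \<le> C" by blast
  qed
  then obtain C where C: "\<And>j k. P j k \<le> C" by blast
  show ?thesis unfolding Suf_def
  proof (intro exI allI)
    fix j k
    have eq: "c1 j * bq j ^ k = (1/2)^j * WM M \<rho> k * P j k"
      unfolding c1_def P_def WM_eq using r Npos[of k] mj_pos[of j]
      by (simp add: power_divide field_simps)
    have "(1/2)^j * WM M \<rho> k * P j k \<le> (1/2)^j * WM M \<rho> k * C"
      using C[of j k] r Npos[of k] by (intro mult_left_mono) (auto simp: WM_eq)
    then show "c1 j * bq j ^ k \<le> C * (1/2)^j * WM M \<rho> k" unfolding eq by (simp add: ac_simps)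
  qed
qed

lemma T1_hyp: "hyp c1 bq"
  by (rule Suf_hyp[OF T1_suf[of 1]]) (use c1_pos bq_pos in \<open>auto simp: less_imp_le\<close>)

definition yq :: "nat \<Rightarrow> real" where "yq j = (real j + 1)^2 * bq j"

lemma yq_pos: "yq j > 0" unfolding yq_def using bq_pos[of j] by simp

lemma m_yq:
  assumes r: "\<rho> > 0" and j: "real j + 1 \<ge> \<rho>"
  shows "mM M ((real j + 1) * bq j) \<le> mM M (yq j / \<rho>)"
proof (rule m_mono)
  show "0 \<le> (real j + 1) * bq j" using bq_pos[of j] by simp
  have "(real j + 1) * bq j * \<rho> \<le> (real j + 1) * bq j * (real j + 1)"
    using j bq_pos[of j] by (intro mult_left_mono) auto
  then show "(real j + 1) * bq j \<le> yq j / \<rho>" unfolding yq_def using r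
    by (simp add: field_simps power2_eq_square)
qed

lemma Tnec_m:
  assumes "Nec c yq (WM M \<rho>)" "\<rho> > 0" "\<And>j. c j > 0"
  shows "\<exists>C. \<forall>j. c j * mM M (yq j / \<rho>) \<le> C"
proof -
  obtain C where C: "\<And>j k. c j * yq j ^ k \<le> C * WM M \<rho> k" using assms(1) unfolding Nec_def by blast
  have "c j * mM M (yq j / \<rho>) \<le> C" for j
  proof -
    have "mM M (yq j / \<rho>) \<le> C / c j"
    proof (rule m_least)
      fix k
      have "(yq j / \<rho>) ^ k / NM M k = (c j * yq j ^ k) / (c j * WM M \<rho> k)"
        using assms(2) assms(3)[of j] Npos[of k] by (simp add: WM_eq power_divide field_simps)
      also have "\<dots> \<le> (C * WM M \<rho> k) / (c j * WM M \<rho> k)"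
        using C[of j k] assms(2) assms(3)[of j] Npos[of k] by (intro divide_right_mono) (auto simp: WM_eq)
      also have "\<dots> = C / c j" using assms(2) Npos[of k] by (simp add: WM_eq)
      finally show "(yq j / \<rho>) ^ k / NM M k \<le> C / c j" .
    qed
    then show ?thesis using assms(3)[of j] by (simp add: field_simps)
  qed
  then show ?thesis by blast
qed

end


context mctx
begin

lemma T1_bound:
  assumes "Nec c1 bq (WG s \<rho>)" "s > 0" "\<rho> > 0"
  shows "\<exists>C1>0. \<forall>j. 1 / mM M ((real j + 1) * bq j)
          \<le> exp (ln C1 + real j * ln 2 - ((bq j / \<rho>) powr (1/(1+s)) / 2 - 1) * ln 2)"
proof -
  obtain C where C: "\<And>j. c1 j * 2 powr ((bq j/\<rho>) powr (1/(1+s)) / 2 - 1) \<le> C"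
    using Gnec[OF assms] c1_pos bq_pos by (metis less_imp_le)
  have Cpos: "C > 0"
  proof -
    have "0 < c1 0 * 2 powr ((bq 0/\<rho>) powr (1/(1+s)) / 2 - 1)" using c1_pos[of 0] by simp
    then show ?thesis using C[of 0] by linarith
  qed
  have "1 / mM M ((real j + 1) * bq j)
          \<le> exp (ln C + real j * ln 2 - ((bq j / \<rho>) powr (1/(1+s)) / 2 - 1) * ln 2)" for j
  proof -
    define Q where "Q = (bq j/\<rho>) powr (1/(1+s)) / 2 - 1"
    have e1: "1 / mM M ((real j + 1) * bq j) = (c1 j * 2 powr Q) * (2 ^ j / 2 powr Q)"
      unfolding c1_def using mj_pos[of j] by (simp add: field_simps power_one_over)
    have "\<dots> \<le> C * (2 ^ j / 2 powr Q)" using C[of j] unfolding Q_def by (intro mult_right_mono) auto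
    also have "\<dots> = exp (ln C + real j * ln 2 - Q * ln 2)"
      using Cpos by (simp add: exp_add exp_diff exp_of_nat_mult powr_def exp_ln)
    finally show ?thesis unfolding e1 Q_def .
  qed
  then show ?thesis using Cpos by blast
qed

lemma M_B:
  assumes Tnec: "\<And>c b. hyp c b \<Longrightarrow> tf c b \<in> EG_beurling \<Longrightarrow> \<exists>\<rho>>0. Nec c b (WM M \<rho>)"
    and T1in: "tf c1 bq \<in> EG_beurling"
  shows False
proof -
  define c2 where "c2 j = exp (real j) / mM M ((real j + 1) * bq j)" for j
  have c2pos: "c2 j > 0" for j unfolding c2_def using mj_pos[of j] by simp
  have suf: "Suf c2 yq (WG s \<rho>)" if s: "s > 0" and r: "\<rho> > 0" for s \<rho>
  proof -
    define \<sigma> where "\<sigma> = 1/(1+s)"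
    define \<sigma>' where "\<sigma>' = 1/(1+s/2)"
    have \<sigma>: "0 < \<sigma>" "\<sigma> < \<sigma>'" "\<sigma> \<le> 2" using s unfolding \<sigma>_def \<sigma>'_def by (auto simp: field_simps)
    have s2: "s/2 > 0" using s by simp
    have "Nec c1 bq (WG (s/2) 1)" by (rule EGB_nec[OF T1_hyp T1in s2]) simp
    from T1_bound[OF this s2] obtain C1 where C1: "C1 > 0"
      "\<And>j. 1 / mM M ((real j + 1) * bq j) \<le> exp (ln C1 + real j * ln 2 - ((bq j / 1) powr (1/(1+s/2)) / 2 - 1) * ln 2)"
      by auto
    define K1 where "K1 = (1+s) * \<rho> powr (- \<sigma>)"
    define K3 where "K3 = \<bar>ln C1\<bar> + ln 2"
    have l2: "ln 2 / 2 > (0::real)" by simp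
    obtain J where J0: "\<forall>j\<ge>J. K1 * (real j + 1)^4 * exp (\<sigma> * real j^2) + 3 * (real j + 1)^4 + K3 \<le> ln 2 / 2 * exp (\<sigma>' * real j^2)"
      using master'[OF \<sigma>(1) \<sigma>(2) l2, of K1 3 K3] by blast
    define F where "F j = real j + (ln C1 + real j * ln 2 - (exp (\<sigma>' * real j ^ 2) / 2 - 1) * ln 2) + (1+s) * (yq j/\<rho>) powr \<sigma>" for j
    have "\<exists>C. \<forall>j. exp (F j) \<le> C * (1/2)^j"
    proof (rule exp_half)
      fix j assume "j \<ge> J"
      then have J: "K1 * (real j + 1)^4 * exp (\<sigma> * real j^2) + 3 * (real j + 1)^4 + K3 \<le> ln 2 / 2 * exp (\<sigma>' * real j^2)"
        using J0 by blast
      have h1: "(1+s) * (yq j/\<rho>) powr \<sigma> \<le> K1 * (real j + 1)^4 * exp (\<sigma> * real j^2)"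
      proof -
        have "(yq j/\<rho>) powr \<sigma> \<le> (real j + 1)^4 * exp (\<sigma> * real j ^ 2) * \<rho> powr (- \<sigma>)"
          unfolding yq_def using y_powr_le[OF \<sigma>(1) \<sigma>(3) r] .
        then have "(1+s) * (yq j/\<rho>) powr \<sigma> \<le> (1+s) * ((real j + 1)^4 * exp (\<sigma> * real j ^ 2) * \<rho> powr (- \<sigma>))"
          using s by (intro mult_left_mono) auto
        then show ?thesis unfolding K1_def by (simp add: ac_simps)
      qed
      have h2: "real j + 2 * (real j * ln 2) \<le> 3 * (real j + 1)^4" using pow4(1)[of j] jln2[of j] by linarith
      have h3: "ln C1 \<le> \<bar>ln C1\<bar>" by simp
      have h4: "(exp (\<sigma>' * real j ^ 2) / 2 - 1) * ln 2 = ln 2 / 2 * exp (\<sigma>' * real j^2) - ln 2"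
        by (simp add: algebra_simps)
      show "F j + real j * ln 2 \<le> 0" unfolding F_def K3_def using J h1 h2 h3 h4 unfolding K3_def by linarith
    qed
    then obtain C where C: "\<And>j. exp (F j) \<le> C * (1/2)^j" by blast
    show ?thesis
    proof (rule Gsuf[OF s r])
      fix j
      show "c2 j \<ge> 0" using c2pos[of j] by simp
      show "yq j \<ge> 0" using yq_pos[of j] by simp
      have bq1: "(bq j / 1) powr (1/(1+s/2)) = exp (\<sigma>' * real j ^ 2)"
        unfolding \<sigma>'_def using bq_powr[of 1 j] by simp
      have "c2 j * exp ((1+s) * (yq j/\<rho>) powr (1/(1+s)))
            = exp (real j) * (1 / mM M ((real j + 1) * bq j)) * exp ((1+s) * (yq j/\<rho>) powr \<sigma>)"
        unfolding c2_def \<sigma>_def by simp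
      also have "\<dots> \<le> exp (real j) * exp (ln C1 + real j * ln 2 - (exp (\<sigma>' * real j ^ 2) / 2 - 1) * ln 2) * exp ((1+s) * (yq j/\<rho>) powr \<sigma>)"
        using C1(2)[of j] unfolding bq1 by (intro mult_right_mono mult_left_mono) auto
      also have "\<dots> = exp (F j)" unfolding F_def by (simp add: exp_add)
      also have "\<dots> \<le> C * (1/2)^j" by (rule C)
      finally show "c2 j * exp ((1+s) * (yq j/\<rho>) powr (1/(1+s))) \<le> C * (1/2)^j" .
    qed
  qed
  have hyp2: "hyp c2 yq"
    by (rule Suf_hyp[OF suf[of 1 1]]) (use c2pos yq_pos in \<open>auto simp: less_imp_le\<close>)
  have "tf c2 yq \<in> EG_beurling" by (rule EGB_suf[OF hyp2 suf])
  from Tnec[OF hyp2 this] obtain \<rho> where r: "\<rho> > 0" "Nec c2 yq (WM M \<rho>)" by blast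
  from Tnec_m[OF r(2) r(1) c2pos] obtain C where C: "\<And>j. c2 j * mM M (yq j / \<rho>) \<le> C" by blast
  define j where "j = max (nat \<lceil>\<rho>\<rceil>) (nat \<lceil>C\<rceil>)"
  have j1: "real j + 1 \<ge> \<rho>" unfolding j_def by linarith
  have j2: "real j \<ge> C" unfolding j_def by linarith
  have "exp (real j) = c2 j * mM M ((real j + 1) * bq j)" unfolding c2_def using mj_pos[of j] by simp
  also have "\<dots> \<le> c2 j * mM M (yq j / \<rho>)" using m_yq[OF r(1) j1] c2pos[of j] by (intro mult_left_mono) auto
  also have "\<dots> \<le> C" by (rule C)
  finally have "exp (real j) \<le> C" .
  moreover have "exp (real j) \<ge> 1 + real j" by (rule exp_ge_add_one_self)
  ultimately show False using j2 by linarith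
qed

lemma M_R:
  assumes Tnec: "\<And>c b. hyp c b \<Longrightarrow> tf c b \<in> EG_roumieu \<Longrightarrow> \<exists>\<rho>>0. Nec c b (WM M \<rho>)"
    and T1in: "tf c1 bq \<in> EG_roumieu"
  shows False
proof -
  obtain s \<rho> where s: "s > 0" and r: "\<rho> > 0" and N1: "Nec c1 bq (WG s \<rho>)"
    using EGR_nec[OF T1_hyp T1in] by blast
  from T1_bound[OF N1 s r] obtain C1 where C1: "C1 > 0"
    "\<And>j. 1 / mM M ((real j + 1) * bq j) \<le> exp (ln C1 + real j * ln 2 - ((bq j / \<rho>) powr (1/(1+s)) / 2 - 1) * ln 2)"
    by auto
  define \<sigma> where "\<sigma> = 1/(1+s)"
  define \<alpha> where "\<alpha> = \<sigma>/2"
  define s' where "s' = 4/\<sigma>"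
  define \<sigma>' where "\<sigma>' = 1/(1+s')"
  have \<sigma>: "0 < \<sigma>" "\<sigma> \<le> 1" using s unfolding \<sigma>_def by (auto simp: field_simps)
  have \<alpha>: "0 < \<alpha>" "\<alpha> < \<sigma>" "\<alpha> \<le> 2" using \<sigma> unfolding \<alpha>_def by auto
  have s': "s' > 0" using \<sigma> unfolding s'_def by simp
  have \<sigma>': "0 < \<sigma>'" "\<sigma>' < \<alpha>" "\<sigma>' \<le> 2"
  proof -
    show "0 < \<sigma>'" using s' unfolding \<sigma>'_def by simp
    have "\<sigma>' = \<sigma> / (\<sigma> + 4)" unfolding \<sigma>'_def s'_def using \<sigma> by (simp add: field_simps)
    moreover have "\<sigma> / (\<sigma> + 4) < \<sigma> / 2" using \<sigma> by (intro divide_strict_left_mono) auto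
    ultimately show "\<sigma>' < \<alpha>" unfolding \<alpha>_def by simp
    show "\<sigma>' \<le> 2" unfolding \<sigma>'_def using s' by (simp add: field_simps)
  qed
  define c2 where "c2 j = exp (- ((yq j) powr \<alpha>))" for j
  have c2pos: "c2 j > 0" for j unfolding c2_def by simp
  have suf: "Suf c2 yq (WG s' 1)"
  proof -
    obtain J where J0: "\<forall>j\<ge>J. (1+s') * (real j + 1)^4 * exp (\<sigma>' * real j^2) + 1 * (real j + 1)^4 + 0 \<le> 1 * exp (\<alpha> * real j^2 - real j)"
      using master[OF \<sigma>'(1) \<sigma>'(2) zero_less_one, of "1+s'" 1 0] by blast
    define F where "F j = - ((yq j) powr \<alpha>) + (1+s') * (yq j/1) powr \<sigma>'" for j
    have "\<exists>C. \<forall>j. exp (F j) \<le> C * (1/2)^j"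
    proof (rule exp_half)
      fix j assume "j \<ge> J"
      then have J: "(1+s') * (real j + 1)^4 * exp (\<sigma>' * real j^2) + 1 * (real j + 1)^4 + 0 \<le> 1 * exp (\<alpha> * real j^2 - real j)"
        using J0 by blast
      have h1: "(1+s') * (yq j/1) powr \<sigma>' \<le> (1+s') * (real j + 1)^4 * exp (\<sigma>' * real j^2)"
      proof -
        have "(yq j/1) powr \<sigma>' \<le> (real j + 1)^4 * exp (\<sigma>' * real j ^ 2) * 1 powr (- \<sigma>')"
          unfolding yq_def using y_powr_le[OF \<sigma>'(1) \<sigma>'(3) zero_less_one] .
        then show ?thesis using s' by (simp add: mult_left_mono mult.assoc)
      qed
      have h2: "exp (\<alpha> * real j^2 - real j) \<le> (yq j) powr \<alpha>"
      proof -
        have "exp (\<alpha> * real j^2 - real j) \<le> exp (\<alpha> * real j^2)" by simp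
        also have "\<dots> \<le> (yq j) powr \<alpha>" unfolding yq_def by (rule y_powr_ge[OF \<alpha>(1)])
        finally show ?thesis .
      qed
      show "F j + real j * ln 2 \<le> 0" unfolding F_def using J h1 h2 jln2[of j] by linarith
    qed
    then obtain C where C: "\<And>j. exp (F j) \<le> C * (1/2)^j" by blast
    show ?thesis
    proof (rule Gsuf[OF s' zero_less_one])
      fix j
      show "c2 j \<ge> 0" using c2pos[of j] by simp
      show "yq j \<ge> 0" using yq_pos[of j] by simp
      have "c2 j * exp ((1+s') * (yq j/1) powr (1/(1+s'))) = exp (F j)"
        unfolding c2_def F_def \<sigma>'_def by (simp add: exp_add[symmetric])
      then show "c2 j * exp ((1+s') * (yq j/1) powr (1/(1+s'))) \<le> C * (1/2)^j" using C[of j] by simp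
    qed
  qed
  have hyp2: "hyp c2 yq"
    by (rule Suf_hyp[OF suf]) (use c2pos yq_pos in \<open>auto simp: less_imp_le\<close>)
  have "tf c2 yq \<in> EG_roumieu" by (rule EGR_suf[OF hyp2 s' zero_less_one suf])
  from Tnec[OF hyp2 this] obtain \<rho>' where r': "\<rho>' > 0" "Nec c2 yq (WM M \<rho>')" by blast
  from Tnec_m[OF r'(2) r'(1) c2pos] obtain C2 where C2: "\<And>j. c2 j * mM M (yq j / \<rho>') \<le> C2" by blast
  have C2pos: "C2 > 0"
  proof -
    have "0 < c2 0 * mM M (yq 0 / \<rho>')" using c2pos[of 0] yq_pos[of 0] r' by (intro mult_pos_pos m_pos) auto
    then show ?thesis using C2[of 0] by linarith
  qed
  define K4 where "K4 = ln 2 / 2 * \<rho> powr (- \<sigma>)"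
  have K4: "K4 > 0" unfolding K4_def using r by simp
  define K3 where "K3 = \<bar>ln C1\<bar> + \<bar>ln C2\<bar> + ln 2 + 1"
  obtain J where J0: "\<forall>j\<ge>J. 1 * (real j + 1)^4 * exp (\<alpha> * real j^2) + 1 * (real j + 1)^4 + K3 \<le> K4 * exp (\<sigma> * real j^2)"
    using master'[OF \<alpha>(1) \<alpha>(2) K4, of 1 1 K3] by blast
  define j where "j = max J (nat \<lceil>\<rho>'\<rceil>)"
  have jJ: "j \<ge> J" unfolding j_def by simp
  have J: "1 * (real j + 1)^4 * exp (\<alpha> * real j^2) + 1 * (real j + 1)^4 + K3 \<le> K4 * exp (\<sigma> * real j^2)"
    using J0 jJ by blast
  have j1: "real j + 1 \<ge> \<rho>'" unfolding j_def by linarith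
  define G where "G = ln C1 + real j * ln 2 - ((bq j / \<rho>) powr (1/(1+s)) / 2 - 1) * ln 2"
  have mj: "mM M ((real j + 1) * bq j) \<le> C2 * exp ((yq j) powr \<alpha>)"
  proof -
    have "c2 j * mM M ((real j + 1) * bq j) \<le> c2 j * mM M (yq j / \<rho>')"
      using m_yq[OF r'(1) j1] c2pos[of j] by (intro mult_left_mono) auto
    also have "\<dots> \<le> C2" by (rule C2)
    finally show ?thesis unfolding c2_def by (simp add: exp_minus field_simps)
  qed
  have "1 = mM M ((real j + 1) * bq j) * (1 / mM M ((real j + 1) * bq j))" using mj_pos[of j] by simp
  also have "\<dots> \<le> (C2 * exp ((yq j) powr \<alpha>)) * exp G"
    using mj C1(2)[of j] mj_pos[of j] unfolding G_def by (intro mult_mono) auto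
  also have "\<dots> = exp (ln C2 + (yq j) powr \<alpha> + G)" using C2pos by (simp add: exp_add)
  finally have "0 \<le> ln C2 + (yq j) powr \<alpha> + G" by simp
  moreover have "(yq j) powr \<alpha> \<le> (real j + 1)^4 * exp (\<alpha> * real j^2)"
  proof -
    have "(yq j / 1) powr \<alpha> \<le> (real j + 1)^4 * exp (\<alpha> * real j ^ 2) * 1 powr (- \<alpha>)"
      unfolding yq_def using y_powr_le[OF \<alpha>(1) \<alpha>(3) zero_less_one] .
    then show ?thesis by simp
  qed
  moreover have "((bq j / \<rho>) powr (1/(1+s)) / 2 - 1) * ln 2 = K4 * exp (\<sigma> * real j^2) - ln 2"
    unfolding K4_def \<sigma>_def using bq_powr[OF r, of j "1/(1+s)"] by (simp add: algebra_simps)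
  moreover have "ln C1 \<le> \<bar>ln C1\<bar>" "ln C2 \<le> \<bar>ln C2\<bar>" by auto
  ultimately show False using J jln2[of j] unfolding G_def K3_def by linarith
qed

end


lemma exp_le_imp: "exp (a::real) \<le> C \<Longrightarrow> a \<le> ln C"
proof -
  assume h: "exp a \<le> C"
  have C: "C > 0" using h exp_gt_zero[of a] by linarith
  then have "exp a \<le> exp (ln C)" using h by simp
  then show ?thesis by simp
qed

lemma lin_aux:
  fixes a A t L :: real
  assumes "a \<le> A/2" "- a + 3/4 * A - t \<le> L"
  shows "A \<le> 4 * (L + t)"
  using assms by argo

locale octx =
  fixes \<omega> :: "real \<Rightarrow> real"
  assumes w: "weight_fun \<omega>"
begin

lemma wnn: "\<omega> (bq j) \<ge> 0" using wf_nonneg[OF w] bq_pos[of j] by simp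

definition d1 :: "nat \<Rightarrow> real" where "d1 j = exp (- (real j + 1) * \<omega> (bq j) - real j)"

lemma d1_pos: "d1 j > 0" unfolding d1_def by simp

lemma T1_suf:
  assumes r: "\<rho> > 0"
  shows "Suf d1 bq (WO \<omega> \<rho>)"
proof -
  define F where "F j = - (real j + 1) * \<omega> (bq j) - real j + \<omega> (bq j) / \<rho>" for j
  have "\<exists>C. \<forall>j. exp (F j) \<le> C * (1/2)^j"
  proof (rule exp_half[of "nat \<lceil>1/\<rho>\<rceil>" _ 0])
    fix j assume "j \<ge> nat \<lceil>1/\<rho>\<rceil>"
    then have "1/\<rho> \<le> real j + 1" by linarith
    then have "(1/\<rho>) * \<omega> (bq j) \<le> (real j + 1) * \<omega> (bq j)" using wnn[of j] by (intro mult_right_mono) auto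
    moreover have "real j * ln 2 \<le> real j" using ln_2_less_1 by (simp add: mult_left_le)
    moreover have "- (real j + 1) * \<omega> (bq j) = - ((real j + 1) * \<omega> (bq j))" by (simp only: minus_mult_left)
    moreover have "\<omega> (bq j) / \<rho> = 1 / \<rho> * \<omega> (bq j)" by simp
    ultimately show "F j + real j * ln 2 \<le> 0" unfolding F_def by linarith
  qed
  then obtain C where C: "\<And>j. exp (F j) \<le> C * (1/2)^j" by blast
  show ?thesis
  proof (rule Osuf[OF w r])
    fix j
    show "d1 j \<ge> 0" using d1_pos[of j] by simp
    show "bq j \<ge> 1" by (rule bq_ge1)
    show "d1 j * exp (\<omega> (bq j) / \<rho>) \<le> C * (1/2)^j"
      using C[of j] unfolding d1_def F_def by (simp add: exp_add[symmetric])
  qed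
qed

lemma T1_hyp: "hyp d1 bq"
  by (rule Suf_hyp[OF T1_suf[of 1]]) (use d1_pos bq_pos in \<open>auto simp: less_imp_le\<close>)

lemma T1_lower:
  assumes "Nec d1 bq (WG s \<rho>)" "s > 0" "\<rho> > 0"
  shows "\<exists>C1>0. \<forall>j. ((bq j / \<rho>) powr (1/(1+s)) / 2 - 1) * ln 2 - real j - ln C1 \<le> (real j + 1) * \<omega> (bq j)"
proof -
  obtain C where C: "\<And>j. d1 j * 2 powr ((bq j/\<rho>) powr (1/(1+s)) / 2 - 1) \<le> C"
    using Gnec[OF assms] d1_pos bq_pos by (metis less_imp_le)
  have Cpos: "C > 0"
  proof -
    have "0 < d1 0 * 2 powr ((bq 0/\<rho>) powr (1/(1+s)) / 2 - 1)" using d1_pos[of 0] by simp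
    then show ?thesis using C[of 0] by linarith
  qed
  have "((bq j / \<rho>) powr (1/(1+s)) / 2 - 1) * ln 2 - real j - ln C \<le> (real j + 1) * \<omega> (bq j)" for j
  proof -
    define Q where "Q = (bq j/\<rho>) powr (1/(1+s)) / 2 - 1"
    have "d1 j * 2 powr Q = exp (- (real j + 1) * \<omega> (bq j) - real j + Q * ln 2)"
      unfolding d1_def by (simp add: powr_def exp_add[symmetric])
    then have "- (real j + 1) * \<omega> (bq j) - real j + Q * ln 2 \<le> ln C"
      using C[of j] unfolding Q_def by (intro exp_le_imp) simp
    then show ?thesis unfolding Q_def by (simp add: algebra_simps)
  qed
  then show ?thesis using Cpos by blast
qed

lemma O_B:
  assumes Tnec: "\<And>c b. hyp c b \<Longrightarrow> tf c b \<in> EG_beurling \<Longrightarrow> \<exists>\<rho>>0. Nec c b (WO \<omega> \<rho>)"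
    and T1in: "tf d1 bq \<in> EG_beurling"
  shows False
proof -
  define c2 where "c2 j = exp (- (\<omega> (bq j) / (real j + 1)))" for j
  have c2pos: "c2 j > 0" for j unfolding c2_def by simp
  have suf: "Suf c2 bq (WG s \<rho>)" if s: "s > 0" and r: "\<rho> > 0" for s \<rho>
  proof -
    define \<sigma> where "\<sigma> = 1/(1+s)"
    define \<sigma>' where "\<sigma>' = 1/(1+s/2)"
    have \<sigma>: "0 < \<sigma>" "\<sigma> < \<sigma>'" "\<sigma> \<le> 2" using s unfolding \<sigma>_def \<sigma>'_def by (auto simp: field_simps)
    have s2: "s/2 > 0" using s by simp
    have "Nec d1 bq (WG (s/2) 1)" by (rule EGB_nec[OF T1_hyp T1in s2]) simp
    from T1_lower[OF this s2] obtain C1 where C1: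
      "\<And>j. ((bq j / 1) powr (1/(1+s/2)) / 2 - 1) * ln 2 - real j - ln C1 \<le> (real j + 1) * \<omega> (bq j)"
      by auto
    define K1 where "K1 = (1+s) * \<rho> powr (- \<sigma>)"
    define K3 where "K3 = \<bar>ln C1\<bar> + ln 2"
    have l2: "ln 2 / 2 > (0::real)" by simp
    obtain J where J0: "\<forall>j\<ge>J. K1 * (real j + 1)^4 * exp (\<sigma> * real j^2) + 2 * (real j + 1)^4 + K3 \<le> ln 2 / 2 * exp (\<sigma>' * real j^2)"
      using master'[OF \<sigma>(1) \<sigma>(2) l2, of K1 2 K3] by blast
    define F where "F j = - (\<omega> (bq j) / (real j + 1)) + (1+s) * (bq j/\<rho>) powr \<sigma>" for j
    have "\<exists>C. \<forall>j. exp (F j) \<le> C * (1/2)^j"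
    proof (rule exp_half)
      fix j assume "j \<ge> J"
      then have J: "K1 * (real j + 1)^4 * exp (\<sigma> * real j^2) + 2 * (real j + 1)^4 + K3 \<le> ln 2 / 2 * exp (\<sigma>' * real j^2)"
        using J0 by blast
      define X where "X = (1+s) * (bq j/\<rho>) powr \<sigma> + real j * ln 2"
      have jp: "real j + 1 > 0" by simp
      have h1: "(real j + 1)^2 * ((1+s) * (bq j/\<rho>) powr \<sigma>) \<le> K1 * (real j + 1)^4 * exp (\<sigma> * real j^2)"
      proof -
        have "(real j + 1)^2 * ((1+s) * (bq j/\<rho>) powr \<sigma>) = (real j + 1)^2 * (K1 * exp (\<sigma> * real j^2))"
          unfolding K1_def using r by (simp add: bq_powr ac_simps)
        also have "\<dots> \<le> (real j + 1)^4 * (K1 * exp (\<sigma> * real j^2))"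
          using pow4(3)[of j] s unfolding K1_def by (intro mult_right_mono) auto
        finally show ?thesis by (simp add: ac_simps)
      qed
      have h2: "(real j + 1)^2 * (real j * ln 2) + real j \<le> 2 * (real j + 1)^4"
      proof -
        have a: "real j * ln 2 \<le> real j" using ln_2_less_1 by (simp add: mult_left_le)
        have "(real j + 1)^1 \<le> (real j + 1)^2" by (intro power_increasing) auto
        then have b: "real j * ln 2 \<le> (real j + 1)^2" using a by simp
        have "(real j + 1)^2 * (real j * ln 2) \<le> (real j + 1)^2 * (real j + 1)^2"
          using b by (intro mult_left_mono) auto
        also have "\<dots> = (real j + 1)^4" by (simp add: power_add[symmetric])
        finally show ?thesis using pow4(1)[of j] by linarith
      qed
      have bq1: "(bq j / 1) powr (1/(1+s/2)) = exp (\<sigma>' * real j ^ 2)"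
        unfolding \<sigma>'_def using bq_powr[of 1 j] by simp
      have h4: "(exp (\<sigma>' * real j ^ 2) / 2 - 1) * ln 2 = ln 2 / 2 * exp (\<sigma>' * real j^2) - ln 2"
        by (simp add: algebra_simps)
      have "(real j + 1)^2 * X \<le> (real j + 1) * \<omega> (bq j)"
        using C1[of j] J h1 h2 h4 unfolding bq1 X_def K3_def by (simp add: algebra_simps)
      then have "(real j + 1) * ((real j + 1) * X) \<le> (real j + 1) * \<omega> (bq j)" by (simp add: power2_eq_square ac_simps)
      then have "(real j + 1) * X \<le> \<omega> (bq j)" using jp by simp
      then have "X \<le> \<omega> (bq j) / (real j + 1)" using jp by (simp add: field_simps)
      then show "F j + real j * ln 2 \<le> 0" unfolding F_def X_def by simp
    qed
    then obtain C where C: "\<And>j. exp (F j) \<le> C * (1/2)^j" by blast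
    show ?thesis
    proof (rule Gsuf[OF s r])
      fix j
      show "c2 j \<ge> 0" using c2pos[of j] by simp
      show "bq j \<ge> 0" using bq_pos[of j] by simp
      show "c2 j * exp ((1+s) * (bq j/\<rho>) powr (1/(1+s))) \<le> C * (1/2)^j"
        using C[of j] unfolding c2_def F_def \<sigma>_def by (simp add: exp_add[symmetric])
    qed
  qed
  have hyp2: "hyp c2 bq"
    by (rule Suf_hyp[OF suf[of 1 1]]) (use c2pos bq_pos in \<open>auto simp: less_imp_le\<close>)
  have "tf c2 bq \<in> EG_beurling" by (rule EGB_suf[OF hyp2 suf])
  from Tnec[OF hyp2 this] obtain \<rho> where r: "\<rho> > 0" "Nec c2 bq (WO \<omega> \<rho>)" by blast
  from Onec[OF r(2) w r(1)] c2pos obtain C B where CB: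
    "\<And>j. bq j \<ge> B \<Longrightarrow> c2 j * exp (3/4 * \<omega> (bq j) / \<rho> - ln (bq j)) \<le> C"
    by (metis less_imp_le)
  have "Nec d1 bq (WG 1 1)" by (rule EGB_nec[OF T1_hyp T1in]) simp_all
  from T1_lower[OF this] obtain C1 where C1:
    "\<And>j. ((bq j / 1) powr (1/(1+1)) / 2 - 1) * ln 2 - real j - ln C1 \<le> (real j + 1) * \<omega> (bq j)"
    by auto
  define K2 where "K2 = 4 * \<rho> * (1 + \<bar>ln C\<bar>) + 1"
  define K3 where "K3 = \<bar>ln C1\<bar> + ln 2 + 1"
  have l2: "ln 2 / 2 > (0::real)" by simp
  have q: "(0::real) < 1/4" "(1/4::real) < 1/2" by auto
  obtain J where J0: "\<forall>j\<ge>J. 0 * (real j + 1)^4 * exp (1/4 * real j^2) + K2 * (real j + 1)^4 + K3 \<le> ln 2 / 2 * exp (1/2 * real j^2)"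
    using master'[OF q l2, of 0 K2 K3] by blast
  define j where "j = max J (max (nat \<lceil>B\<rceil>) (nat \<lceil>2 * \<rho>\<rceil>))"
  have J: "0 * (real j + 1)^4 * exp (1/4 * real j^2) + K2 * (real j + 1)^4 + K3 \<le> ln 2 / 2 * exp (1/2 * real j^2)"
    using J0 unfolding j_def by simp
  have jB: "bq j \<ge> B" using bq_ge[of j] unfolding j_def by linarith
  have j2: "real j + 1 \<ge> 2 * \<rho>" unfolding j_def by linarith
  have "c2 j * exp (3/4 * \<omega> (bq j) / \<rho> - ln (bq j)) = exp (- (\<omega> (bq j) / (real j + 1)) + 3/4 * \<omega> (bq j) / \<rho> - real j ^ 2)"
    unfolding c2_def bq_ln by (simp add: exp_add[symmetric])
  with CB[OF jB] have e: "- (\<omega> (bq j) / (real j + 1)) + 3/4 * \<omega> (bq j) / \<rho> - real j ^ 2 \<le> ln C"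
    by (intro exp_le_imp) simp
  have "\<omega> (bq j) / (real j + 1) \<le> \<omega> (bq j) / (2 * \<rho>)"
    using j2 wnn[of j] r(1) by (intro divide_left_mono) auto
  then have a1: "\<omega> (bq j) / (real j + 1) \<le> (\<omega> (bq j) / \<rho>) / 2" by simp
  have a2: "- (\<omega> (bq j) / (real j + 1)) + 3/4 * (\<omega> (bq j) / \<rho>) - real j ^ 2 \<le> ln C" using e by simp
  have "\<omega> (bq j) / \<rho> \<le> 4 * (ln C + real j ^ 2)" by (rule lin_aux[OF a1 a2])
  then have wle: "\<omega> (bq j) \<le> 4 * \<rho> * (ln C + real j ^ 2)" using r(1) by (simp add: pos_divide_le_eq ac_simps)
  have "(real j + 1) * \<omega> (bq j) \<le> (real j + 1) * (4 * \<rho> * (ln C + real j ^ 2))"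
    using wle by (intro mult_left_mono) auto
  also have "\<dots> = 4 * \<rho> * ((real j + 1) * ln C + (real j + 1) * real j ^ 2)" by (simp add: algebra_simps)
  also have "\<dots> \<le> 4 * \<rho> * ((real j + 1)^4 * \<bar>ln C\<bar> + (real j + 1)^4)"
  proof -
    have "(real j + 1) * ln C \<le> (real j + 1) * \<bar>ln C\<bar>" by (intro mult_left_mono) auto
    also have "\<dots> \<le> (real j + 1)^4 * \<bar>ln C\<bar>"
    proof (intro mult_right_mono)
      show "real j + 1 \<le> (real j + 1)^4" using power_increasing[of 1 4 "real j + 1"] by simp
    qed simp
    finally show ?thesis using pow4(4)[of j] r(1) by (intro mult_left_mono) auto
  qed
  finally have up: "(real j + 1) * \<omega> (bq j) \<le> (K2 - 1) * (real j + 1)^4" unfolding K2_def by (simp add: algebra_simps)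
  have bq1: "(bq j / 1) powr (1/(1+1)) = exp (1/2 * real j ^ 2)" using bq_powr[of 1 j "1/(1+1)"] by simp
  have lo: "ln 2 / 2 * exp (1/2 * real j^2) - ln 2 - real j - ln C1 \<le> (real j + 1) * \<omega> (bq j)"
    using C1[of j] unfolding bq1 by (simp add: algebra_simps)
  show False using J up lo pow4(1)[of j] pow4(5)[of j] unfolding K3_def by (simp add: algebra_simps)
qed

lemma O_R:
  assumes Tnec: "\<And>c b. hyp c b \<Longrightarrow> tf c b \<in> EG_roumieu \<Longrightarrow> \<exists>\<rho>>0. Nec c b (WO \<omega> \<rho>)"
    and T1in: "tf d1 bq \<in> EG_roumieu"
  shows False
proof -
  obtain s \<rho> where s: "s > 0" and r: "\<rho> > 0" and N1: "Nec d1 bq (WG s \<rho>)"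
    using EGR_nec[OF T1_hyp T1in] by blast
  from T1_lower[OF N1 s r] obtain C1 where C1:
    "\<And>j. ((bq j / \<rho>) powr (1/(1+s)) / 2 - 1) * ln 2 - real j - ln C1 \<le> (real j + 1) * \<omega> (bq j)"
    by auto
  define \<sigma> where "\<sigma> = 1/(1+s)"
  define \<alpha> where "\<alpha> = \<sigma>/2"
  define s' where "s' = 4/\<sigma>"
  define \<sigma>' where "\<sigma>' = 1/(1+s')"
  have \<sigma>: "0 < \<sigma>" "\<sigma> \<le> 1" using s unfolding \<sigma>_def by (auto simp: field_simps)
  have \<alpha>: "0 < \<alpha>" "\<alpha> < \<sigma>" using \<sigma> unfolding \<alpha>_def by auto
  have s': "s' > 0" using \<sigma> unfolding s'_def by simp
  have \<sigma>': "0 < \<sigma>'" "\<sigma>' < \<alpha>"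
  proof -
    show "0 < \<sigma>'" using s' unfolding \<sigma>'_def by simp
    have "\<sigma>' = \<sigma> / (\<sigma> + 4)" unfolding \<sigma>'_def s'_def using \<sigma> by (simp add: field_simps)
    moreover have "\<sigma> / (\<sigma> + 4) < \<sigma> / 2" using \<sigma> by (intro divide_strict_left_mono) auto
    ultimately show "\<sigma>' < \<alpha>" unfolding \<alpha>_def by simp
  qed
  define c2 where "c2 j = exp (- ((bq j) powr \<alpha>))" for j
  have c2pos: "c2 j > 0" for j unfolding c2_def by simp
  have suf: "Suf c2 bq (WG s' 1)"
  proof -
    obtain J where J0: "\<forall>j\<ge>J. (1+s') * (real j + 1)^4 * exp (\<sigma>' * real j^2) + 1 * (real j + 1)^4 + 0 \<le> 1 * exp (\<alpha> * real j^2 - real j)"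
      using master[OF \<sigma>'(1) \<sigma>'(2) zero_less_one, of "1+s'" 1 0] by blast
    define F where "F j = - ((bq j) powr \<alpha>) + (1+s') * (bq j/1) powr \<sigma>'" for j
    have "\<exists>C. \<forall>j. exp (F j) \<le> C * (1/2)^j"
    proof (rule exp_half)
      fix j assume "j \<ge> J"
      then have J: "(1+s') * (real j + 1)^4 * exp (\<sigma>' * real j^2) + 1 * (real j + 1)^4 + 0 \<le> 1 * exp (\<alpha> * real j^2 - real j)"
        using J0 by blast
      have h1: "(1+s') * (bq j/1) powr \<sigma>' \<le> (1+s') * (real j + 1)^4 * exp (\<sigma>' * real j^2)"
      proof -
        have "(1+s') * (bq j/1) powr \<sigma>' = (1+s') * exp (\<sigma>' * real j^2)" by (simp add: bq_powr1)
        also have "\<dots> \<le> (1+s') * exp (\<sigma>' * real j^2) * (real j + 1)^4" by (rule le_mult_pow4) (use s' in simp)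
        finally show ?thesis by (simp add: ac_simps)
      qed
      have h2: "exp (\<alpha> * real j^2 - real j) \<le> (bq j) powr \<alpha>" by (simp add: bq_powr1)
      show "F j + real j * ln 2 \<le> 0" unfolding F_def using J h1 h2 jln2[of j] by linarith
    qed
    then obtain C where C: "\<And>j. exp (F j) \<le> C * (1/2)^j" by blast
    show ?thesis
    proof (rule Gsuf[OF s' zero_less_one])
      fix j
      show "c2 j \<ge> 0" using c2pos[of j] by simp
      show "bq j \<ge> 0" using bq_pos[of j] by simp
      have "c2 j * exp ((1+s') * (bq j/1) powr (1/(1+s'))) = exp (F j)"
        unfolding c2_def F_def \<sigma>'_def by (simp add: exp_add[symmetric])
      then show "c2 j * exp ((1+s') * (bq j/1) powr (1/(1+s'))) \<le> C * (1/2)^j" using C[of j] by simp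
    qed
  qed
  have hyp2: "hyp c2 bq"
    by (rule Suf_hyp[OF suf]) (use c2pos bq_pos in \<open>auto simp: less_imp_le\<close>)
  have "tf c2 bq \<in> EG_roumieu" by (rule EGR_suf[OF hyp2 s' zero_less_one suf])
  from Tnec[OF hyp2 this] obtain \<rho>' where r': "\<rho>' > 0" "Nec c2 bq (WO \<omega> \<rho>')" by blast
  from Onec[OF r'(2) w r'(1)] c2pos obtain C2 B where CB:
    "\<And>j. bq j \<ge> B \<Longrightarrow> c2 j * exp (3/4 * \<omega> (bq j) / \<rho>' - ln (bq j)) \<le> C2"
    by (metis less_imp_le)
  define K4 where "K4 = ln 2 / 2 * \<rho> powr (- \<sigma>)"
  have K4: "K4 > 0" unfolding K4_def using r by simp
  define P where "P = 4 * \<rho>' / 3"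
  have P: "P > 0" unfolding P_def using r' by simp
  define K2 where "K2 = P * (\<bar>ln C2\<bar> + 1) + 1"
  define K3 where "K3 = \<bar>ln C1\<bar> + ln 2 + 1"
  obtain J where J0: "\<forall>j\<ge>J. P * (real j + 1)^4 * exp (\<alpha> * real j^2) + K2 * (real j + 1)^4 + K3 \<le> K4 * exp (\<sigma> * real j^2)"
    using master'[OF \<alpha>(1) \<alpha>(2) K4, of P K2 K3] by blast
  define j where "j = max J (nat \<lceil>B\<rceil>)"
  have J: "P * (real j + 1)^4 * exp (\<alpha> * real j^2) + K2 * (real j + 1)^4 + K3 \<le> K4 * exp (\<sigma> * real j^2)"
    using J0 unfolding j_def by simp
  have jB: "bq j \<ge> B" using bq_ge[of j] unfolding j_def by linarith
  have "c2 j * exp (3/4 * \<omega> (bq j) / \<rho>' - ln (bq j)) = exp (- exp (\<alpha> * real j ^ 2) + 3/4 * \<omega> (bq j) / \<rho>' - real j ^ 2)"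
    unfolding c2_def bq_ln bq_powr1 by (simp add: exp_add[symmetric])
  with CB[OF jB] have e: "- exp (\<alpha> * real j ^ 2) + 3/4 * \<omega> (bq j) / \<rho>' - real j ^ 2 \<le> ln C2"
    by (intro exp_le_imp) simp
  then have "3/4 * \<omega> (bq j) / \<rho>' \<le> ln C2 + exp (\<alpha> * real j ^ 2) + real j ^ 2" by simp
  then have wle: "\<omega> (bq j) \<le> P * (ln C2 + exp (\<alpha> * real j ^ 2) + real j ^ 2)"
    unfolding P_def using r'(1) by (simp add: field_simps)
  have p1: "real j + 1 \<le> (real j + 1)^4" using power_increasing[of 1 4 "real j + 1"] by simp
  have "(real j + 1) * \<omega> (bq j) \<le> (real j + 1) * (P * (ln C2 + exp (\<alpha> * real j ^ 2) + real j ^ 2))"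
    using wle by (intro mult_left_mono) auto
  also have "\<dots> = P * ((real j + 1) * ln C2 + (real j + 1) * exp (\<alpha> * real j ^ 2) + (real j + 1) * real j ^ 2)"
    by (simp add: algebra_simps)
  also have "\<dots> \<le> P * ((real j + 1)^4 * \<bar>ln C2\<bar> + (real j + 1)^4 * exp (\<alpha> * real j ^ 2) + (real j + 1)^4)"
  proof (intro mult_left_mono add_mono)
    have "(real j + 1) * ln C2 \<le> (real j + 1) * \<bar>ln C2\<bar>" by (intro mult_left_mono) auto
    also have "\<dots> \<le> (real j + 1)^4 * \<bar>ln C2\<bar>" using p1 by (intro mult_right_mono) auto
    finally show "(real j + 1) * ln C2 \<le> (real j + 1)^4 * \<bar>ln C2\<bar>" .
    show "(real j + 1) * exp (\<alpha> * real j ^ 2) \<le> (real j + 1)^4 * exp (\<alpha> * real j ^ 2)"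
      using p1 by (intro mult_right_mono) auto
    show "(real j + 1) * real j ^ 2 \<le> (real j + 1)^4" by (rule pow4(4))
  qed (use P in simp)
  finally have up: "(real j + 1) * \<omega> (bq j) \<le> P * (real j + 1)^4 * exp (\<alpha> * real j ^ 2) + (K2 - 1) * (real j + 1)^4"
    unfolding K2_def by (simp add: algebra_simps)
  have lo: "K4 * exp (\<sigma> * real j^2) - ln 2 - real j - ln C1 \<le> (real j + 1) * \<omega> (bq j)"
  proof -
    have "((bq j / \<rho>) powr (1/(1+s)) / 2 - 1) * ln 2 = K4 * exp (\<sigma> * real j^2) - ln 2"
      unfolding K4_def \<sigma>_def using bq_powr[OF r, of j "1/(1+s)"] by (simp add: algebra_simps)
    then show ?thesis using C1[of j] by simp
  qed
  show False using J up lo pow4(1)[of j] pow4(5)[of j] unfolding K3_def by (simp add: algebra_simps)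
qed

end


lemma EG_suf_any:
  assumes "E = EG_beurling \<or> E = EG_roumieu" "hyp c b"
    "\<And>s \<rho>. s > 0 \<Longrightarrow> \<rho> > 0 \<Longrightarrow> Suf c b (WG s \<rho>)"
  shows "tf c b \<in> E"
  using assms EGB_suf[OF assms(2,3)] EGR_suf[OF assms(2) zero_less_one zero_less_one assms(3)[OF zero_less_one zero_less_one]]
  by blast

lemma M_final:
  assumes Mpos: "\<And>k. M k > 0" and E: "E = EG_beurling \<or> E = EG_roumieu"
    and T: "T = E_beurling M \<or> T = E_roumieu M" and ET: "E = T"
  shows False
proof -
  have Tsuf: "tf c b \<in> E" if "hyp c b" "\<And>\<rho>. \<rho> > 0 \<Longrightarrow> Suf c b (WM M \<rho>)" for c b
    using M_suf[OF that(1) Mpos that(2)] T ET by blast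
  have Tnec: "\<exists>\<rho>>0. Nec c b (WM M \<rho>)" if "hyp c b" "tf c b \<in> E" for c b
    using M_nec[of c b M, OF that(1) Mpos] that(2) T ET by blast
  have Esuf: "tf c b \<in> E" if "hyp c b" "\<And>s \<rho>. s > 0 \<Longrightarrow> \<rho> > 0 \<Longrightarrow> Suf c b (WG s \<rho>)" for c b
    by (rule EG_suf_any[OF E that])
  have mb: "bdd_above (range (\<lambda>k. x ^ k / NM M k))" if "x \<ge> 0" for x
    by (rule M_T0[OF Mpos Tnec Esuf that]) auto
  interpret mctx M by unfold_locales (use Mpos mb in auto)
  have T1in: "tf c1 bq \<in> E" by (rule Tsuf[OF T1_hyp T1_suf])
  show False
  proof (cases "E = EG_beurling")
    case True
    show False by (rule M_B[OF Tnec]) (use True T1in in auto)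
  next
    case False
    then have R: "E = EG_roumieu" using E by blast
    show False by (rule M_R[OF Tnec]) (use R T1in in auto)
  qed
qed

lemma O_final:
  assumes w: "weight_fun \<omega>" and E: "E = EG_beurling \<or> E = EG_roumieu"
    and T: "T = Eomega_beurling \<omega> \<or> T = Eomega_roumieu \<omega>" and ET: "E = T"
  shows False
proof -
  interpret octx \<omega> by unfold_locales (rule w)
  have Tsuf: "tf c b \<in> E" if "hyp c b" "\<And>\<rho>. \<rho> > 0 \<Longrightarrow> Suf c b (WO \<omega> \<rho>)" for c b
    using O_suf[OF that(1) that(2)] T ET by blast
  have Tnec: "\<exists>\<rho>>0. Nec c b (WO \<omega> \<rho>)" if "hyp c b" "tf c b \<in> E" for c b
    using O_nec[OF that(1)] that(2) T ET by blast
  have T1in: "tf d1 bq \<in> E" by (rule Tsuf[OF T1_hyp T1_suf])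
  show False
  proof (cases "E = EG_beurling")
    case True
    show False by (rule O_B[OF Tnec]) (use True T1in in auto)
  next
    case False
    then have R: "E = EG_roumieu" using E by blast
    show False by (rule O_R[OF Tnec]) (use R T1in in auto)
  qed
qed

theorem theorem5p22:
  shows "\<forall>E \<in> {EG_beurling, EG_roumieu}.
           (\<forall>M::nat \<Rightarrow> real. (\<forall>k. M k > 0) \<longrightarrow>
               E \<noteq> E_beurling M \<and> E \<noteq> E_roumieu M) \<and>
           (\<forall>\<omega>. weight_fun \<omega> \<longrightarrow>
               E \<noteq> Eomega_beurling \<omega> \<and> E \<noteq> Eomega_roumieu \<omega>)"
proof (intro ballI conjI allI impI)
  fix E assume E0: "E \<in> {EG_beurling, EG_roumieu}"
  then have E: "E = EG_beurling \<or> E = EG_roumieu" by blast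
  fix M :: "nat \<Rightarrow> real" assume M: "\<forall>k. M k > 0"
  show "E \<noteq> E_beurling M"
  proof
    assume "E = E_beurling M"
    then show False using M_final[of M E "E_beurling M"] M E by blast
  qed
  show "E \<noteq> E_roumieu M"
  proof
    assume "E = E_roumieu M"
    then show False using M_final[of M E "E_roumieu M"] M E by blast
  qed
next
  fix E assume E0: "E \<in> {EG_beurling, EG_roumieu}"
  then have E: "E = EG_beurling \<or> E = EG_roumieu" by blast
  fix \<omega> :: "real \<Rightarrow> real" assume w: "weight_fun \<omega>"
  show "E \<noteq> Eomega_beurling \<omega>"
  proof
    assume "E = Eomega_beurling \<omega>"
    then show False using O_final[OF w E, of "Eomega_beurling \<omega>"] by blast
  qed
  show "E \<noteq> Eomega_roumieu \<omega>"
  proof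
    assume "E = Eomega_roumieu \<omega>"
    then show False using O_final[OF w E, of "Eomega_roumieu \<omega>"] by blast
  qed
qed

end
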